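(* Let $X$ be a compact metric space with metric $d$, let $f\colon X\to X$ be a continuous map with the s-limit shadowing property, let $C\in\mathcal{C}(f)$ and $D\in\mathcal{D}(C)$. Let $\mathcal{F},\mathcal{G}$ be full Furstenberg families which are compatible with $(X^n,f^{\times n})$ for all $n\ge2$, and suppose $\mathcal{F}$ is translation invariant. Let $n\ge2$ and $\delta>0$. If there is a $\delta$-distal $n$-tuple $(a_1,\dots,a_n)\in D^n$ for $f$, then for every $E\in\mathcal{D}(C)$ and every $0<r<\delta$, $V^s(E)$ is generic $(\mathcal{F},\mathcal{G})$-$n$-$r$-chaotic for $f$.
   Context: A $\delta$-chain of $f$ ($\delta>0$) is a finite sequence $(x_i)_{i=0}^k$, $k\ge1$, with $d(f(x_i),x_{i+1})\le\delta$ for $0\le i\le k-1$; it is a $\delta$-cycle if $x_0=x_k$, with length $k$. Write $x\to y$ if for every $\delta>0$ there is a $\delta$-chain from $x$ to $y$. Let $CR(f)=\{x\colon x\to x\}$; on $CR(f)$ let $x\leftrightarrow y$ iff $x\to y$ and $y\to x$; its classes are the chain components, forming $\mathcal{C}(f)$. For $C\in\mathcal{C}(f)$, $\delta>0$, let $m=m(C,\delta)$ be the gcd of the lengths of all $\delta$-cycles of $f|_C$, and for $x,y\in C$ let $x\sim_{C,\delta}y$ iff there is a $\delta$-chain of $f|_C$ from $x$ to $y$ of length divisible by $m$; $\mathcal{D}(C,\delta)$ is the set of its equivalence classes. Let $x\sim_C y$ iff $x\sim_{C,\delta}y$ for all $\delta>0$; $\mathcal{D}(C)$ is its set of classes. For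 $D\in\mathcal{D}(C)$, $D_\delta$ is the element of $\mathcal{D}(C,\delta)$ containing $D$. $W^s(C)=\{x\colon\lim_i d(f^i(x),C)=0\}$ and $V^s(D)=\bigcap_{\delta>0}\{x\in W^s(C)\colon\lim_i d(f^i(x),f^i(D_\delta))=0\}$. $f$ has the s-limit shadowing property if for every $\epsilon>0$ there is $\delta>0$ such that for every sequence $(x_i)_{i\ge0}$ with $d(f(x_i),x_{i+1})\le\delta$ for all $i$ and $d(f(x_i),x_{i+1})\to0$ there is $x\in X$ with $d(f^i(x),x_i)\le\epsilon$ for all $i$ and $d(f^i(x),x_i)\to0$. A Furstenberg family is a nonempty proper family $\mathcal{F}\subsetneq 2^{\mathbb{N}_0}$ closed under taking supersets; it is full if $\{i\in A\colon i\ge n\}\in\mathcal{F}$ for all $A\in\mathcal{F}$, $n\ge0$; translation invariant if $\{i+n\colon i\in A\}\in\mathcal{F}$ and $\{i\in\mathbb{N}_0\colon i+n\in A\}\in\mathcal{F}$ for all $A\in\mathcal{F}$, $n\ge0$. $f^{\times n}$ is the $n$-fold product map on $X^n$. $\mathcal{F}$ is compatible with $(X^n,f^{\times n})$ if for every open $U\subset X^n$ the set $\{z\in X^n\colon\{i\in\mathbb{N}_0\colon (f^{\times n})^i(z)\in U\}\in\mathcal{F}\}$ is a $G_\delta$-subset of $X^n$. $(x_1,\dots,x_n)$ is a $\delta$-distal $n$-tuple for $f$ if $\inf_{i\ge0}\min_{1\le j<k\le n}d(f^i(x_j),f^i(x_k))>\delta$. For $x_1,\dots,x_n\in X$, $r>0$: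 $S_f(x_1,\dots,x_n;r)=\{i\in\mathbb{N}_0\colon\min_{j<k}d(f^i(x_j),f^i(x_k))>r\}$ and $T_f(x_1,\dots,x_n;r)=\{i\in\mathbb{N}_0\colon\max_{j<k}d(f^i(x_j),f^i(x_k))<r\}$. $(x_1,\dots,x_n)$ is $(\mathcal{F},\mathcal{G})$-$r$-scrambled if $S_f(x_1,\dots,x_n;r)\in\mathcal{F}$ and $T_f(x_1,\dots,x_n;\epsilon)\in\mathcal{G}$ for all $\epsilon>0$. A nonempty $Y\subset X$ is generic $(\mathcal{F},\mathcal{G})$-$n$-$r$-chaotic for $f$ if the set of $(\mathcal{F},\mathcal{G})$-$r$-scrambled $n$-tuples in $Y^n$ is residual in $Y^n$ (contains a countable intersection of dense open subsets of $Y^n$). *)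

theory Defs
  imports "HOL-Analysis.Analysis"
begin

text \<open>Chains. A delta-chain of length k from x to y whose points all lie in S
  (take S = UNIV for chains of f, S = C for chains of f restricted to C).\<close>
definition chain_in :: "('a::metric_space \<Rightarrow> 'a) \<Rightarrow> 'a set \<Rightarrow> real \<Rightarrow> 'a \<Rightarrow> 'a \<Rightarrow> nat \<Rightarrow> bool" where
  "chain_in f S \<delta> x y k \<longleftrightarrow> k \<ge> 1 \<and> (\<exists>xs::nat \<Rightarrow> 'a. xs 0 = x \<and> xs k = y \<and>
      (\<forall>i\<le>k. xs i \<in> S) \<and> (\<forall>i<k. dist (f (xs i)) (xs (Suc i)) \<le> \<delta>))"

definition chain_to :: "('a::metric_space \<Rightarrow> 'a) \<Rightarrow> 'a \<Rightarrow> 'a \<Rightarrow> bool" where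
  "chain_to f x y \<longleftrightarrow> (\<forall>\<delta>>0. \<exists>k. chain_in f UNIV \<delta> x y k)"

definition CR :: "('a::metric_space \<Rightarrow> 'a) \<Rightarrow> 'a set" where
  "CR f = {x. chain_to f x x}"

definition chain_components :: "('a::metric_space \<Rightarrow> 'a) \<Rightarrow> 'a set set" where
  "chain_components f = CR f // {(x, y). x \<in> CR f \<and> y \<in> CR f \<and> chain_to f x y \<and> chain_to f y x}"

definition cyc_gcd :: "('a::metric_space \<Rightarrow> 'a) \<Rightarrow> 'a set \<Rightarrow> real \<Rightarrow> nat" where
  "cyc_gcd f C \<delta> = Gcd {k. \<exists>x. chain_in f C \<delta> x x k}"

definition rel_delta :: "('a::metric_space \<Rightarrow> 'a) \<Rightarrow> 'a set \<Rightarrow> real \<Rightarrow> 'a \<Rightarrow> 'a \<Rightarrow> bool" where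
  "rel_delta f C \<delta> x y \<longleftrightarrow> x \<in> C \<and> y \<in> C \<and> (\<exists>k. chain_in f C \<delta> x y k \<and> cyc_gcd f C \<delta> dvd k)"

definition D_delta_classes :: "('a::metric_space \<Rightarrow> 'a) \<Rightarrow> 'a set \<Rightarrow> real \<Rightarrow> 'a set set" where
  "D_delta_classes f C \<delta> = C // {(x, y). rel_delta f C \<delta> x y}"

definition D_classes :: "('a::metric_space \<Rightarrow> 'a) \<Rightarrow> 'a set \<Rightarrow> 'a set set" where
  "D_classes f C = C // {(x, y). x \<in> C \<and> y \<in> C \<and> (\<forall>\<delta>>0. rel_delta f C \<delta> x y)}"

definition D_sub :: "('a::metric_space \<Rightarrow> 'a) \<Rightarrow> 'a set \<Rightarrow> 'a set \<Rightarrow> real \<Rightarrow> 'a set" where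
  "D_sub f C D \<delta> = (THE E. E \<in> D_delta_classes f C \<delta> \<and> D \<subseteq> E)"

definition Ws :: "('a::metric_space \<Rightarrow> 'a) \<Rightarrow> 'a set \<Rightarrow> 'a set" where
  "Ws f C = {x. (\<lambda>i. infdist ((f ^^ i) x) C) \<longlonglongrightarrow> 0}"

definition Vs :: "('a::metric_space \<Rightarrow> 'a) \<Rightarrow> 'a set \<Rightarrow> 'a set \<Rightarrow> 'a set" where
  "Vs f C D = (\<Inter>\<delta>\<in>{\<delta>. \<delta> > 0}.
     {x \<in> Ws f C. (\<lambda>i. infdist ((f ^^ i) x) ((f ^^ i) ` D_sub f C D \<delta>)) \<longlonglongrightarrow> 0})"

definition s_limit_shadowing :: "('a::metric_space \<Rightarrow> 'a) \<Rightarrow> bool" where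
  "s_limit_shadowing f \<longleftrightarrow> (\<forall>\<epsilon>>0. \<exists>\<delta>>0. \<forall>xs::nat \<Rightarrow> 'a.
     (\<forall>i. dist (f (xs i)) (xs (Suc i)) \<le> \<delta>) \<and> (\<lambda>i. dist (f (xs i)) (xs (Suc i))) \<longlonglongrightarrow> 0 \<longrightarrow>
     (\<exists>x. (\<forall>i. dist ((f ^^ i) x) (xs i) \<le> \<epsilon>) \<and> (\<lambda>i. dist ((f ^^ i) x) (xs i)) \<longlonglongrightarrow> 0))"

definition furstenberg_family :: "nat set set \<Rightarrow> bool" where
  "furstenberg_family F \<longleftrightarrow> F \<noteq> {} \<and> F \<noteq> UNIV \<and> (\<forall>A B. A \<in> F \<and> A \<subseteq> B \<longrightarrow> B \<in> F)"

definition full_family :: "nat set set \<Rightarrow> bool" where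
  "full_family F \<longleftrightarrow> (\<forall>A\<in>F. \<forall>n. {i \<in> A. i \<ge> n} \<in> F)"

definition translation_invariant :: "nat set set \<Rightarrow> bool" where
  "translation_invariant F \<longleftrightarrow> (\<forall>A\<in>F. \<forall>n. (\<lambda>i. i + n) ` A \<in> F \<and> {i. i + n \<in> A} \<in> F)"

text \<open>n-tuples in X^n are functions on {..<n} (extensional), with the product topology.\<close>
definition prod_top :: "nat \<Rightarrow> (nat \<Rightarrow> 'a::topological_space) topology" where
  "prod_top n = product_topology (\<lambda>_. euclidean) {..<n}"

definition prod_map :: "('a \<Rightarrow> 'a) \<Rightarrow> nat \<Rightarrow> (nat \<Rightarrow> 'a) \<Rightarrow> (nat \<Rightarrow> 'a)" where
  "prod_map f n z = restrict (\<lambda>j. f (z j)) {..<n}"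

definition compatible :: "nat set set \<Rightarrow> ('a::topological_space \<Rightarrow> 'a) \<Rightarrow> nat \<Rightarrow> bool" where
  "compatible F f n \<longleftrightarrow> (\<forall>U. openin (prod_top n) U \<longrightarrow>
     gdelta_in (prod_top n) {z \<in> topspace (prod_top n). {i. (prod_map f n ^^ i) z \<in> U} \<in> F})"

definition pair_dists :: "('a::metric_space \<Rightarrow> 'a) \<Rightarrow> nat \<Rightarrow> (nat \<Rightarrow> 'a) \<Rightarrow> nat \<Rightarrow> real set" where
  "pair_dists f n x i = {dist ((f ^^ i) (x j)) ((f ^^ i) (x k)) | j k. j < k \<and> k < n}"

definition distal_tuple :: "('a::metric_space \<Rightarrow> 'a) \<Rightarrow> real \<Rightarrow> nat \<Rightarrow> (nat \<Rightarrow> 'a) \<Rightarrow> bool" where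
  "distal_tuple f \<delta> n x \<longleftrightarrow> (INF i. Min (pair_dists f n x i)) > \<delta>"

definition S_set :: "('a::metric_space \<Rightarrow> 'a) \<Rightarrow> nat \<Rightarrow> (nat \<Rightarrow> 'a) \<Rightarrow> real \<Rightarrow> nat set" where
  "S_set f n x r = {i. Min (pair_dists f n x i) > r}"

definition T_set :: "('a::metric_space \<Rightarrow> 'a) \<Rightarrow> nat \<Rightarrow> (nat \<Rightarrow> 'a) \<Rightarrow> real \<Rightarrow> nat set" where
  "T_set f n x r = {i. Max (pair_dists f n x i) < r}"

definition scrambled :: "nat set set \<Rightarrow> nat set set \<Rightarrow> ('a::metric_space \<Rightarrow> 'a) \<Rightarrow> nat \<Rightarrow> real \<Rightarrow> (nat \<Rightarrow> 'a) \<Rightarrow> bool" where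
  "scrambled F G f n r x \<longleftrightarrow> S_set f n x r \<in> F \<and> (\<forall>\<epsilon>>0. T_set f n x \<epsilon> \<in> G)"

definition residual_in :: "'b topology \<Rightarrow> 'b set \<Rightarrow> bool" where
  "residual_in T S \<longleftrightarrow> S \<subseteq> topspace T \<and> (\<exists>\<U>. countable \<U> \<and>
     (\<forall>U\<in>\<U>. openin T U \<and> T closure_of U = topspace T) \<and> topspace T \<inter> \<Inter>\<U> \<subseteq> S)"

definition generic_chaotic :: "nat set set \<Rightarrow> nat set set \<Rightarrow> ('a::metric_space \<Rightarrow> 'a) \<Rightarrow> nat \<Rightarrow> real \<Rightarrow> 'a set \<Rightarrow> bool" where
  "generic_chaotic F G f n r Y \<longleftrightarrow> Y \<noteq> {} \<and>
     residual_in (subtopology (prod_top n) (PiE {..<n} (\<lambda>_. Y)))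
       {z \<in> PiE {..<n} (\<lambda>_. Y). scrambled F G f n r z}"

end

theory Submission
  imports Defs
begin
lemma chain_inI:
  assumes "k \<ge> 1" "xs 0 = x" "xs k = y" "\<And>i. i \<le> k \<Longrightarrow> xs i \<in> S"
    "\<And>i. i < k \<Longrightarrow> dist (f (xs i)) (xs (Suc i)) \<le> \<delta>"
  shows "chain_in f S \<delta> x y k"
  using assms unfolding chain_in_def by blast

lemma chain_inE:
  assumes "chain_in f S \<delta> x y k"
  obtains xs where "k \<ge> 1" "xs 0 = x" "xs k = y" "\<And>i. i \<le> k \<Longrightarrow> xs i \<in> S"
    "\<And>i. i < k \<Longrightarrow> dist (f (xs i)) (xs (Suc i)) \<le> \<delta>"
  using assms unfolding chain_in_def by blast

lemma chain_ends: "chain_in f S \<delta> x y k \<Longrightarrow> x \<in> S \<and> y \<in> S \<and> k \<ge> 1"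
  by (metis chain_inE le0 order_refl)

lemma chain_cat:
  assumes "chain_in f S \<delta> x y k" "chain_in f S \<delta> y z l"
  shows "chain_in f S \<delta> x z (k + l)"
proof -
  obtain xs where xs: "k \<ge> 1" "xs 0 = x" "xs k = y" "\<And>i. i \<le> k \<Longrightarrow> xs i \<in> S"
    "\<And>i. i < k \<Longrightarrow> dist (f (xs i)) (xs (Suc i)) \<le> \<delta>" using chain_inE[OF assms(1)] by metis
  obtain ys where ys: "l \<ge> 1" "ys 0 = y" "ys l = z" "\<And>i. i \<le> l \<Longrightarrow> ys i \<in> S"
    "\<And>i. i < l \<Longrightarrow> dist (f (ys i)) (ys (Suc i)) \<le> \<delta>" using chain_inE[OF assms(2)] by metis
  define zs where "zs i = (if i \<le> k then xs i else ys (i - k))" for i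
  show ?thesis
  proof (rule chain_inI[where xs = zs])
    show "zs 0 = x" "zs (k+l) = z" using xs ys by (auto simp: zs_def)
    show "i \<le> k + l \<Longrightarrow> zs i \<in> S" for i using xs ys by (auto simp: zs_def)
    show "dist (f (zs i)) (zs (Suc i)) \<le> \<delta>" if "i < k + l" for i
    proof (cases "i < k")
      case True then show ?thesis using xs by (auto simp: zs_def)
    next
      case False
      then have "Suc i - k = Suc (i - k)" by auto
      then show ?thesis using False ys that xs(3) by (auto simp: zs_def)
    qed
  qed (use xs in auto)
qed

lemma chain_mono:
  assumes "chain_in f S \<delta> x y k" "S \<subseteq> S'" "\<delta> \<le> \<delta>'"
  shows "chain_in f S' \<delta>' x y k"
proof -
  obtain xs where xs: "k \<ge> 1" "xs 0 = x" "xs k = y" "\<And>i. i \<le> k \<Longrightarrow> xs i \<in> S"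
    "\<And>i. i < k \<Longrightarrow> dist (f (xs i)) (xs (Suc i)) \<le> \<delta>" using chain_inE[OF assms(1)] by metis
  show ?thesis by (rule chain_inI[where xs=xs]) (use xs assms in \<open>auto intro: order_trans\<close>)
qed

lemma chain_step:
  assumes "x \<in> S" "y \<in> S" "dist (f x) y \<le> \<delta>"
  shows "chain_in f S \<delta> x y 1"
  by (rule chain_inI[where xs="\<lambda>i. if i = 0 then x else y"]) (use assms in auto)

lemma chain_orbit:
  assumes "0 \<le> \<delta>" "k \<ge> 1" "\<And>i. i \<le> k \<Longrightarrow> (f ^^ i) x \<in> S"
  shows "chain_in f S \<delta> x ((f ^^ k) x) k"
  by (rule chain_inI[where xs="\<lambda>i. (f ^^ i) x"]) (use assms in auto)

lemma chain_replace_first: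
  assumes "chain_in f S \<delta> u y k" "w \<in> S" "dist (f w) (f u) \<le> \<eta>"
  shows "chain_in f S (\<delta> + \<eta>) w y k"
proof -
  obtain xs where xs: "k \<ge> 1" "xs 0 = u" "xs k = y" "\<And>i. i \<le> k \<Longrightarrow> xs i \<in> S"
    "\<And>i. i < k \<Longrightarrow> dist (f (xs i)) (xs (Suc i)) \<le> \<delta>" using chain_inE[OF assms(1)] by metis
  have eta: "\<eta> \<ge> 0" using assms(3) zero_le_dist order_trans by blast
  show ?thesis
  proof (rule chain_inI[where xs="xs(0 := w)"])
    show "dist (f ((xs(0 := w)) i)) ((xs(0 := w)) (Suc i)) \<le> \<delta> + \<eta>" if "i < k" for i
    proof (cases "i = 0")
      case True
      have "dist (f w) (xs 1) \<le> dist (f w) (f u) + dist (f u) (xs 1)" by (rule dist_triangle)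
      also have "\<dots> \<le> \<eta> + \<delta>" using assms(3) xs(5)[of 0] xs(1,2) by auto
      finally show ?thesis using True by simp
    next
      case False then show ?thesis using xs(5)[OF that] eta by auto
    qed
  qed (use xs assms in auto)
qed

lemma chain_replace_last:
  assumes "chain_in f S \<delta> x u k" "w \<in> S" "dist u w \<le> \<eta>"
  shows "chain_in f S (\<delta> + \<eta>) x w k"
proof -
  obtain xs where xs: "k \<ge> 1" "xs 0 = x" "xs k = u" "\<And>i. i \<le> k \<Longrightarrow> xs i \<in> S"
    "\<And>i. i < k \<Longrightarrow> dist (f (xs i)) (xs (Suc i)) \<le> \<delta>" using chain_inE[OF assms(1)] by metis
  have eta: "\<eta> \<ge> 0" using assms(3) zero_le_dist order_trans by blast
  show ?thesis
  proof (rule chain_inI[where xs="xs(k := w)"])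
    show "dist (f ((xs(k := w)) i)) ((xs(k := w)) (Suc i)) \<le> \<delta> + \<eta>" if "i < k" for i
    proof (cases "Suc i = k")
      case True
      have "dist (f (xs i)) w \<le> dist (f (xs i)) u + dist u w" by (rule dist_triangle)
      also have "\<dots> \<le> \<delta> + \<eta>" using assms(3) xs(5)[OF that] xs(3) True by auto
      finally show ?thesis using True that by simp
    next
      case False then show ?thesis using xs(5)[OF that] eta that by auto
    qed
  qed (use xs assms in auto)
qed

lemma chain_drop_first:
  assumes "chain_in f S \<delta> x y k" "k \<ge> 2"
  shows "\<exists>u. dist (f x) u \<le> \<delta> \<and> chain_in f S \<delta> u y (k - 1)"
proof -
  obtain xs where xs: "k \<ge> 1" "xs 0 = x" "xs k = y" "\<And>i. i \<le> k \<Longrightarrow> xs i \<in> S"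
    "\<And>i. i < k \<Longrightarrow> dist (f (xs i)) (xs (Suc i)) \<le> \<delta>" using chain_inE[OF assms(1)] by metis
  have "chain_in f S \<delta> (xs 1) y (k - 1)"
    by (rule chain_inI[where xs="\<lambda>i. xs (Suc i)"]) (use xs assms(2) in auto)
  moreover have "dist (f x) (xs 1) \<le> \<delta>" using xs(5)[of 0] xs(1,2) by auto
  ultimately show ?thesis by blast
qed

lemma chain_to_trans: "chain_to f x y \<Longrightarrow> chain_to f y z \<Longrightarrow> chain_to f x z"
  unfolding chain_to_def by (meson chain_cat)

lemma chain_seg:
  assumes "\<And>i. i < k \<Longrightarrow> dist (f (xs i)) (xs (Suc i)) \<le> \<delta>" "\<And>i. i \<le> k \<Longrightarrow> xs i \<in> S"
    "a < b" "b \<le> k"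
  shows "chain_in f S \<delta> (xs a) (xs b) (b - a)"
  by (rule chain_inI[where xs="\<lambda>i. xs (a + i)"]) (use assms in auto)

definition Rel :: "('a::metric_space \<Rightarrow> 'a) \<Rightarrow> ('a \<times> 'a) set" where
  "Rel f = {(x, y). x \<in> CR f \<and> y \<in> CR f \<and> chain_to f x y \<and> chain_to f y x}"

lemma equiv_Rel: "equiv (CR f) (Rel f)"
  unfolding equiv_def refl_on_def sym_def trans_def Rel_def
  by (auto simp: CR_def intro: chain_to_trans)

lemma comp_iff:
  assumes "C \<in> chain_components f" "x \<in> C"
  shows "y \<in> C \<longleftrightarrow> y \<in> CR f \<and> chain_to f x y \<and> chain_to f y x"
proof -
  have "C = Rel f `` {x}"
    using assms equiv_Rel unfolding chain_components_def Rel_def[symmetric]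
    by (metis Image_singleton_iff equiv_class_eq_iff quotientE)
  then show ?thesis using assms unfolding Rel_def chain_components_def
    by (auto simp: CR_def)
qed

lemma comp_sub: "C \<in> chain_components f \<Longrightarrow> C \<subseteq> CR f"
  unfolding chain_components_def using equiv_Rel[of f] unfolding Rel_def
  by (metis (no_types, lifting) Union_quotient Union_upper)

lemma comp_ne: "C \<in> chain_components f \<Longrightarrow> C \<noteq> {}"
  unfolding chain_components_def using equiv_Rel[of f] unfolding Rel_def
  by (metis (no_types, lifting) quotient_eq_iff quotientE equiv_class_self empty_iff)

locale cdyn =
  fixes f :: "'a::metric_space \<Rightarrow> 'a"
  assumes cpt: "compact (UNIV :: 'a set)" and cont: "continuous_on UNIV f"
begin

lemma ucont: "e > 0 \<Longrightarrow> \<exists>d>0. \<forall>x y. dist x y < d \<longrightarrow> dist (f x) (f y) < e"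
  using compact_uniformly_continuous[OF cont cpt] unfolding uniformly_continuous_on_def
  by (metis UNIV_I dist_commute)

lemma cont_iter: "continuous_on UNIV (f ^^ i)"
proof (induction i)
  case 0 then show ?case by (simp add: continuous_on_id)
next
  case (Suc i)
  then show ?case using cont by (simp add: continuous_on_compose2[of UNIV f UNIV "f ^^ i"])
qed

lemma back_step: assumes "x \<in> CR f" shows "chain_to f (f x) x"
  unfolding chain_to_def
proof (intro allI impI)
  fix e :: real assume e: "e > 0"
  obtain d where d: "d > 0" "\<forall>x y. dist x y < d \<longrightarrow> dist (f x) (f y) < e/2"
    using ucont[of "e/2"] e by auto
  define e' where "e' = min (d/2) (e/2)"
  have e': "e' > 0" "e' < d" "e' \<le> e/2" using d e by (auto simp: e'_def)
  obtain k where k: "chain_in f UNIV e' x x k" using assms e' unfolding CR_def chain_to_def by auto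
  have kk: "chain_in f UNIV e' x x (k + k)" by (rule chain_cat[OF k k])
  have "k + k \<ge> 2" using chain_ends[OF k] by auto
  then obtain u where u: "dist (f x) u \<le> e'" "chain_in f UNIV e' u x (k + k - 1)"
    using chain_drop_first[OF kk] by blast
  have "dist (f (f x)) (f u) \<le> e/2" using d u(1) e' by (meson less_eq_real_def order_le_less_trans)
  from chain_replace_first[OF u(2) _ this] have "chain_in f UNIV (e' + e/2) (f x) x (k + k - 1)" by simp
  moreover have "e' + e/2 \<le> e" using e' by linarith
  ultimately show "\<exists>k. chain_in f UNIV e (f x) x k"
    using chain_mono[of f UNIV "e' + e/2"] by blast
qed

lemma fwd_step: "chain_to f x (f x)"
  unfolding chain_to_def
proof (intro allI impI exI)
  fix d :: real assume "d > 0"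
  then show "chain_in f UNIV d x (f x) 1" by (intro chain_step) auto
qed

lemma CR_f: assumes "x \<in> CR f" shows "f x \<in> CR f"
  using assms back_step fwd_step unfolding CR_def by (meson chain_to_trans mem_Collect_eq)

lemma comp_f: assumes "C \<in> chain_components f" "x \<in> C" shows "f x \<in> C"
  using comp_iff[OF assms] comp_sub[OF assms(1)] assms(2) CR_f back_step fwd_step by auto

lemma comp_iter: assumes "C \<in> chain_components f" "x \<in> C" shows "(f ^^ i) x \<in> C"
  by (induction i) (use assms comp_f in auto)

lemma comp_closed: assumes C: "C \<in> chain_components f" shows "closed C"
  unfolding closed_sequential_limits
proof (intro allI impI, elim conjE)
  fix xs l assume xs: "\<forall>n. xs n \<in> C" and lim: "xs \<longlonglongrightarrow> l"
  have to: "chain_to f l (xs 0)"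
    unfolding chain_to_def
  proof (intro allI impI)
    fix e :: real assume e: "e > 0"
    obtain d where d: "d > 0" "\<forall>x y. dist x y < d \<longrightarrow> dist (f x) (f y) < e/2"
      using ucont[of "e/2"] e by auto
    obtain k where "dist (xs k) l < d" using lim d(1) unfolding lim_sequentially
      by (metis order_refl)
    then have dk: "dist (f l) (f (xs k)) \<le> e/2" using d by (metis dist_commute less_eq_real_def)
    have "chain_to f (xs k) (xs 0)" using comp_iff[OF C, of "xs k"] xs by auto
    then obtain m where "chain_in f UNIV (e/2) (xs k) (xs 0) m" using e unfolding chain_to_def by (meson half_gt_zero)
    from chain_replace_first[OF this _ dk] show "\<exists>k. chain_in f UNIV e l (xs 0) k" by auto
  qed
  have fro: "chain_to f (xs 0) l"
    unfolding chain_to_def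
  proof (intro allI impI)
    fix e :: real assume e: "e > 0"
    obtain k where dk: "dist (xs k) l < e/2" using lim e unfolding lim_sequentially
      by (metis order_refl half_gt_zero)
    have "chain_to f (xs 0) (xs k)" using comp_iff[OF C, of "xs 0"] xs by auto
    then obtain m where "chain_in f UNIV (e/2) (xs 0) (xs k) m" using e unfolding chain_to_def by (meson half_gt_zero)
    from chain_replace_last[OF this _ less_imp_le[OF dk]] show "\<exists>k. chain_in f UNIV e (xs 0) l k" by auto
  qed
  have "l \<in> CR f" using to fro unfolding CR_def by (auto intro: chain_to_trans)
  then show "l \<in> C" using comp_iff[OF C, of "xs 0"] xs to fro by auto
qed

end

context cdyn begin
lemma ICT:
  assumes C: "C \<in> chain_components f" and x: "x \<in> C" and y: "y \<in> C" and \<delta>: "\<delta> > 0"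
  shows "\<exists>k. chain_in f C \<delta> x y k"
proof -
  define K where "K = {z. chain_to f x z \<and> chain_to f z x}"
  have xCR: "x \<in> CR f" using comp_sub[OF C] x by auto
  have KC: "K \<subseteq> C"
  proof
    fix z assume "z \<in> K"
    then have "z \<in> CR f" unfolding K_def CR_def by (auto intro: chain_to_trans)
    then show "z \<in> C" using comp_iff[OF C x] \<open>z \<in> K\<close> K_def by auto
  qed
  have xK: "x \<in> K" using xCR unfolding K_def CR_def by auto
  have yK: "y \<in> K" using comp_iff[OF C x] y unfolding K_def by auto
  obtain \<eta> where \<eta>: "\<eta> > 0" "\<eta> \<le> \<delta>/3" "\<forall>u v. dist u v < \<eta> \<longrightarrow> dist (f u) (f v) < \<delta>/3"
  proof -
    obtain d where d: "d > 0" "\<forall>x y. dist x y < d \<longrightarrow> dist (f x) (f y) < \<delta>/3"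
      using ucont[of "\<delta>/3"] \<delta> by auto
    show ?thesis by (rule that[of "min d (\<delta>/3)"]) (use d \<delta> in auto)
  qed
  define A where "A e = {u. (\<exists>k. chain_in f UNIV e x u k) \<and> (\<exists>k. chain_in f UNIV e u x k)}" for e
  have "\<exists>e>0. \<forall>u\<in>A e. \<exists>z\<in>K. dist u z < \<eta>"
  proof (rule ccontr)
    assume "\<not> ?thesis"
    then have "\<forall>i. \<exists>u. u \<in> A (1 / (Suc i)) \<and> (\<forall>z\<in>K. dist u z \<ge> \<eta>)"
      by (metis not_less of_nat_0_less_iff zero_less_Suc zero_less_divide_1_iff)
    then obtain u where u: "\<And>i. u i \<in> A (1 / (Suc i))" "\<And>i z. z \<in> K \<Longrightarrow> dist (u i) z \<ge> \<eta>"
      by metis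
    obtain l r where r: "strict_mono r" and lim: "(u \<circ> r) \<longlonglongrightarrow> l"
      using compact_imp_seq_compact[OF cpt] unfolding seq_compact_def by blast
    have small: "\<exists>i. 1 / real (Suc (r i)) \<le> e \<and> dist (u (r i)) l < d" if "e > 0" "d > 0" for e d
    proof -
      have ev1: "eventually (\<lambda>i. dist (u (r i)) l < d) sequentially"
        using lim that(2) unfolding tendsto_iff by (simp add: o_def)
      have "eventually (\<lambda>i. 1 / real (Suc i) < e) sequentially"
        using LIMSEQ_inverse_real_of_nat that(1) unfolding tendsto_iff
        by (auto simp: inverse_eq_divide elim!: eventually_mono)
      then obtain N where N: "\<And>i. i \<ge> N \<Longrightarrow> 1 / real (Suc i) < e" unfolding eventually_sequentially by auto
      have "eventually (\<lambda>i. 1 / real (Suc (r i)) \<le> e) sequentially"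
        unfolding eventually_sequentially
        by (rule exI[of _ N]) (meson N le_trans less_imp_le r seq_suble)
      from eventually_conj[OF this ev1] show ?thesis using eventually_sequentially by auto
    qed
    have "chain_to f x l" unfolding chain_to_def
    proof (intro allI impI)
      fix e :: real assume e: "e > 0"
      obtain i where i: "1 / real (Suc (r i)) \<le> e/2" "dist (u (r i)) l < e/2"
        using small[of "e/2" "e/2"] e by auto
      obtain k where "chain_in f UNIV (1 / (Suc (r i))) x (u (r i)) k" using u(1) unfolding A_def by blast
      then have "chain_in f UNIV (e/2) x (u (r i)) k" using chain_mono i(1) by blast
      from chain_replace_last[OF this _ less_imp_le[OF i(2)]] show "\<exists>k. chain_in f UNIV e x l k" by auto
    qed
    moreover have "chain_to f l x" unfolding chain_to_def
    proof (intro allI impI)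
      fix e :: real assume e: "e > 0"
      obtain d where d: "d > 0" "\<forall>x y. dist x y < d \<longrightarrow> dist (f x) (f y) < e/2"
        using ucont[of "e/2"] e by auto
      obtain i where i: "1 / real (Suc (r i)) \<le> e/2" "dist (u (r i)) l < d"
        using small[of "e/2" d] e d by auto
      obtain k where "chain_in f UNIV (1 / (Suc (r i))) (u (r i)) x k" using u(1) unfolding A_def by blast
      then have "chain_in f UNIV (e/2) (u (r i)) x k" using chain_mono i(1) by blast
      moreover have "dist (f l) (f (u (r i))) \<le> e/2" using d i(2) by (metis dist_commute less_eq_real_def)
      ultimately show "\<exists>k. chain_in f UNIV e l x k" using chain_replace_first by fastforce
    qed
    ultimately have "l \<in> K" unfolding K_def by auto
    then have "\<And>i. dist (u (r i)) l \<ge> \<eta>" using u(2) by auto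
    moreover obtain i where "dist (u (r i)) l < \<eta>" using small[of 1 \<eta>] \<eta> by auto
    ultimately show False by (meson not_less)
  qed
  then obtain e where e: "e > 0" "\<And>u. u \<in> A e \<Longrightarrow> \<exists>z\<in>K. dist u z < \<eta>" by blast
  define e' where "e' = min e (\<delta>/3)"
  have e': "e' > 0" "e' \<le> e" "e' \<le> \<delta>/3" using e \<delta> by (auto simp: e'_def)
  have Amono: "A e' \<subseteq> A e" unfolding A_def using chain_mono[of f UNIV e'] e' by blast
  obtain L where "chain_in f UNIV e' x y L" using comp_iff[OF C x] y e' unfolding chain_to_def by auto
  then obtain xs where xs: "L \<ge> 1" "xs 0 = x" "xs L = y" "\<And>i. i < L \<Longrightarrow> dist (f (xs i)) (xs (Suc i)) \<le> e'"
    by (auto elim: chain_inE)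
  obtain yx where yx: "chain_in f UNIV e' y x yx" using yK e' unfolding K_def chain_to_def by auto
  obtain xx where xx: "chain_in f UNIV e' x x xx" using xCR e' unfolding CR_def chain_to_def by auto
  have inA: "xs t \<in> A e'" if "t \<le> L" for t
  proof -
    have "\<exists>k. chain_in f UNIV e' x (xs t) k"
    proof (cases "t = 0")
      case True then show ?thesis using xx xs(2) by auto
    next
      case False
      have "chain_in f UNIV e' (xs 0) (xs t) (t - 0)"
        by (rule chain_seg[where k=L]) (use xs(4) False that in auto)
      then show ?thesis using xs(2) by auto
    qed
    moreover have "\<exists>k. chain_in f UNIV e' (xs t) x k"
    proof (cases "t = L")
      case True then show ?thesis using yx xs(3) by auto
    next
      case False
      have "chain_in f UNIV e' (xs t) (xs L) (L - t)"
        by (rule chain_seg[where k=L]) (use xs(4) False that in auto)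
      then show ?thesis using chain_cat[OF _ yx] xs(3) by auto
    qed
    ultimately show ?thesis unfolding A_def by auto
  qed
  have "\<forall>t. \<exists>z. t \<le> L \<longrightarrow> z \<in> K \<and> dist (xs t) z < \<eta>"
  proof
    fix t show "\<exists>z. t \<le> L \<longrightarrow> z \<in> K \<and> dist (xs t) z < \<eta>"
    proof (cases "t \<le> L")
      case True then have "xs t \<in> A e" using inA Amono by blast
      then show ?thesis using e(2) by blast
    qed auto
  qed
  then obtain z where z: "\<And>t. t \<le> L \<Longrightarrow> z t \<in> K \<and> dist (xs t) (z t) < \<eta>" by metis
  define ks where "ks t = (if t = 0 then x else if t = L then y else z t)" for t
  have ks: "ks t \<in> K \<and> dist (xs t) (ks t) < \<eta>" if "t \<le> L" for t
    using z[OF that] xK yK xs \<eta> by (auto simp: ks_def)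
  show ?thesis
  proof (rule exI, rule chain_inI[where xs=ks])
    show "ks 0 = x" "ks L = y" using xs by (auto simp: ks_def)
    show "ks i \<in> C" if "i \<le> L" for i using ks[OF that] KC by auto
    show "dist (f (ks i)) (ks (Suc i)) \<le> \<delta>" if "i < L" for i
    proof -
      have t1: "dist (f (ks i)) (ks (Suc i)) \<le> dist (f (ks i)) (f (xs i)) + dist (f (xs i)) (ks (Suc i))"
        by (rule dist_triangle)
      have t2: "dist (f (xs i)) (ks (Suc i)) \<le> dist (f (xs i)) (xs (Suc i)) + dist (xs (Suc i)) (ks (Suc i))"
        by (rule dist_triangle)
      have a1: "dist (f (ks i)) (f (xs i)) < \<delta>/3" using \<eta>(3) ks[of i] that by (simp add: dist_commute)
      have a2: "dist (xs (Suc i)) (ks (Suc i)) < \<eta>" using ks[of "Suc i"] that by simp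
      have a3: "dist (f (xs i)) (xs (Suc i)) \<le> e'" using xs(4)[OF that] .
      from t1 t2 a1 a2 a3 have "dist (f (ks i)) (ks (Suc i)) \<le> \<delta>/3 + e' + \<eta>" by linarith
      then show ?thesis using e' \<eta> by linarith
    qed
  qed (use xs in auto)
qed

end

lemma equiv_in_class: "equiv A r \<Longrightarrow> X \<in> A // r \<Longrightarrow> x \<in> X \<Longrightarrow> X = r `` {x}"
  by (metis Image_singleton_iff equiv_class_eq quotientE)

locale comp = cdyn +
  fixes C assumes C: "C \<in> chain_components f"
begin

abbreviation m where "m \<delta> \<equiv> cyc_gcd f C \<delta>"

lemma cyc_ex: "x \<in> C \<Longrightarrow> \<delta> > 0 \<Longrightarrow> \<exists>k. chain_in f C \<delta> x x k"
  using ICT[OF C] by blast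

lemma m_dvd: "chain_in f C \<delta> x x k \<Longrightarrow> m \<delta> dvd k"
  unfolding cyc_gcd_def by (rule Gcd_dvd) auto

lemma m_pos: assumes "\<delta> > 0" shows "m \<delta> > 0"
proof -
  obtain x where x: "x \<in> C" using comp_ne[OF C] by auto
  obtain k where k: "chain_in f C \<delta> x x k" using cyc_ex[OF x assms] by auto
  have "k \<ge> 1" using chain_ends[OF k] by auto
  then show ?thesis using m_dvd[OF k] by (metis dvd_0_left_iff gr0I not_one_le_zero)
qed

lemma back_chain: assumes "chain_in f C \<delta> x y k" "\<delta> > 0"
  shows "\<exists>l. chain_in f C \<delta> y x l \<and> m \<delta> dvd k + l"
proof -
  obtain l where l: "chain_in f C \<delta> y x l" using ICT[OF C, of y x \<delta>] chain_ends[OF assms(1)] assms(2) by auto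
  have "m \<delta> dvd k + l" by (rule m_dvd, rule chain_cat[OF assms(1) l])
  then show ?thesis using l by auto
qed

lemma m_mono: assumes "0 < \<delta>1" "\<delta>1 \<le> \<delta>2" shows "m \<delta>2 dvd m \<delta>1"
  unfolding cyc_gcd_def[of f C \<delta>1]
proof (rule Gcd_greatest)
  fix b assume "b \<in> {k. \<exists>x. chain_in f C \<delta>1 x x k}"
  then obtain x where "chain_in f C \<delta>1 x x b" by auto
  then have "chain_in f C \<delta>2 x x b" using chain_mono assms by blast
  then show "m \<delta>2 dvd b" by (rule m_dvd)
qed

definition Rd where "Rd \<delta> = {(x, y). rel_delta f C \<delta> x y}"

lemma rel_equiv: assumes "\<delta> > 0" shows "equiv C (Rd \<delta>)"
proof (rule equivI)
  have "\<And>x. x \<in> C \<Longrightarrow> (x, x) \<in> Rd \<delta>"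
    unfolding Rd_def rel_delta_def using cyc_ex[OF _ assms] m_dvd by blast
  moreover have "Rd \<delta> \<subseteq> C \<times> C" unfolding Rd_def rel_delta_def by auto
  ultimately show "refl_on C (Rd \<delta>)" by (auto simp: refl_on_def)
  show "sym (Rd \<delta>)" unfolding sym_def Rd_def rel_delta_def
  proof (clarsimp)
    fix x y k assume xy: "x \<in> C" "y \<in> C" "chain_in f C \<delta> x y k" "m \<delta> dvd k"
    obtain l where "chain_in f C \<delta> y x l" "m \<delta> dvd k + l" using back_chain[OF xy(3) assms] by auto
    then show "\<exists>k. chain_in f C \<delta> y x k \<and> m \<delta> dvd k" using xy(4) dvd_add_right_iff by blast
  qed
  show "trans (Rd \<delta>)" unfolding trans_def Rd_def rel_delta_def
    by (clarsimp, metis chain_cat dvd_add)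
  show "Rd \<delta> \<subseteq> C \<times> C" unfolding Rd_def rel_delta_def by auto
qed

definition Rinf where "Rinf = {(x, y). x \<in> C \<and> y \<in> C \<and> (\<forall>\<delta>>0. rel_delta f C \<delta> x y)}"

lemma Rinf_equiv: "equiv C Rinf"
proof (rule equivI)
  have e: "\<And>\<delta>. \<delta> > 0 \<Longrightarrow> equiv C (Rd \<delta>)" by (rule rel_equiv)
  have "\<And>x \<delta>. x \<in> C \<Longrightarrow> \<delta> > 0 \<Longrightarrow> rel_delta f C \<delta> x x"
    using e unfolding equiv_def refl_on_def Rd_def by auto
  then show "refl_on C Rinf" by (auto simp: refl_on_def Rinf_def)
  show "sym Rinf" unfolding sym_def Rinf_def
    using e unfolding equiv_def sym_def Rd_def by auto
  show "trans Rinf" unfolding trans_def Rinf_def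
    using e unfolding equiv_def trans_def Rd_def by blast
  show "Rinf \<subseteq> C \<times> C" unfolding Rinf_def by auto
qed

lemma class_rep: assumes "E \<in> D_classes f C" shows "\<exists>x0\<in>C. E = Rinf `` {x0}"
  using assms unfolding D_classes_def Rinf_def[symmetric] by (auto elim: quotientE)

lemma D_sub_eq: assumes "x0 \<in> C" "\<delta> > 0"
  shows "D_sub f C (Rinf `` {x0}) \<delta> = Rd \<delta> `` {x0}"
  unfolding D_sub_def
proof (rule the_equality)
  have sub: "Rinf \<subseteq> Rd \<delta>" using assms(2) unfolding Rinf_def Rd_def by auto
  show "Rd \<delta> `` {x0} \<in> D_delta_classes f C \<delta> \<and> Rinf `` {x0} \<subseteq> Rd \<delta> `` {x0}"
    unfolding D_delta_classes_def Rd_def[symmetric] using assms(1) sub by (auto intro: quotientI)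
  fix E' assume E': "E' \<in> D_delta_classes f C \<delta> \<and> Rinf `` {x0} \<subseteq> E'"
  have "x0 \<in> Rinf `` {x0}" by (rule equiv_class_self[OF Rinf_equiv assms(1)])
  then have "x0 \<in> E'" using E' by auto
  then show "E' = Rd \<delta> `` {x0}"
    using equiv_in_class[OF rel_equiv[OF assms(2)]] E' unfolding D_delta_classes_def Rd_def[symmetric] by blast
qed

lemma Rinf_class_sub: "Rinf `` {x0} \<subseteq> C" unfolding Rinf_def by auto

end

lemma sg_mult:
  fixes S :: "nat set"
  assumes add: "\<And>a b. a \<in> S \<Longrightarrow> b \<in> S \<Longrightarrow> a + b \<in> S" and x: "x \<in> S" and c: "c \<ge> 1"
  shows "c * x \<in> S"
proof -
  have "Suc d * x \<in> S" for d by (induction d) (use x add in auto)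
  then show ?thesis using c by (metis Suc_pred' less_le_trans zero_less_one)
qed

lemma semigroup_lemma:
  fixes S :: "nat set"
  assumes add: "\<And>a b. a \<in> S \<Longrightarrow> b \<in> S \<Longrightarrow> a + b \<in> S"
    and pos: "\<And>a. a \<in> S \<Longrightarrow> a > 0" and ne: "s0 \<in> S"
  shows "\<exists>h>0. (\<forall>s\<in>S. h dvd s) \<and> (\<exists>a\<in>S. \<exists>b\<in>S. a = b + h) \<and> (\<exists>k0. \<forall>k\<ge>k0. k * h \<in> S)"
proof -
  define P where "P n \<longleftrightarrow> n > 0 \<and> (\<exists>a\<in>S. \<exists>b\<in>S. a = b + n)" for n
  have "P s0" unfolding P_def using ne pos add by blast
  define h where "h = (LEAST n. P n)"
  have Ph: "P h" unfolding h_def by (rule LeastI[of P s0]) fact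
  have minh: "\<And>n. P n \<Longrightarrow> h \<le> n" unfolding h_def by (rule Least_le)
  obtain a0 b0 where ab: "a0 \<in> S" "b0 \<in> S" "a0 = b0 + h" and h0: "h > 0" using Ph unfolding P_def by auto
  have dv: "h dvd s" if s: "s \<in> S" for s
  proof (rule ccontr)
    assume nd: "\<not> h dvd s"
    define q where "q = s div h"
    define \<rho> where "\<rho> = s mod h"
    have \<rho>: "\<rho> > 0" "\<rho> < h" using nd h0 by (auto simp: \<rho>_def mod_greater_zero_iff_not_dvd)
    have sq: "s = q * h + \<rho>" by (simp add: q_def \<rho>_def)
    have "P \<rho>"
    proof (cases "q = 0")
      case True
      then have "s + s = s + \<rho>" using sq by simp
      then show ?thesis unfolding P_def using \<rho> add[OF s s] s by metis
    next
      case False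
      have A: "s + q * b0 \<in> S" using add[OF s sg_mult[OF add ab(2), of q]] False by auto
      have B: "q * a0 \<in> S" using sg_mult[OF add ab(1), of q] False by auto
      have "s + q * b0 = q * a0 + \<rho>" using sq ab(3) by (simp add: algebra_simps)
      then show ?thesis unfolding P_def using \<rho> A B by metis
    qed
    then show False using minh \<rho> by fastforce
  qed
  obtain u where u: "b0 = u * h" using dv[OF ab(2)] by (metis dvd_def mult.commute)
  have u1: "u \<ge> 1" using pos[OF ab(2)] u by (cases u) auto
  have big: "k * h \<in> S" if k: "k \<ge> u * u" for k
  proof -
    define q where "q = k div u"
    define \<rho> where "\<rho> = k mod u"
    have kq: "k = q * u + \<rho>" by (simp add: q_def \<rho>_def)
    have \<rho>u: "\<rho> < u" using u1 by (simp add: \<rho>_def)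
    have "q \<ge> u" unfolding q_def using k u1
      by (metis div_le_mono nonzero_mult_div_cancel_right not_one_le_zero)
    then have qr: "q - \<rho> \<ge> 1" using \<rho>u by linarith
    obtain t where t: "q = \<rho> + t" using \<open>q \<ge> u\<close> \<rho>u le_iff_add by (metis less_imp_le order_trans)
    have eq: "k * h = \<rho> * a0 + (q - \<rho>) * b0"
      using t kq u ab(3) by (simp add: algebra_simps)
    have B: "(q - \<rho>) * b0 \<in> S" by (rule sg_mult[OF add ab(2) qr])
    show ?thesis
    proof (cases "\<rho> = 0")
      case True then show ?thesis using eq B by simp
    next
      case False
      then have "\<rho> * a0 \<in> S" using sg_mult[OF add ab(1), of \<rho>] by auto
      then show ?thesis using eq add[OF _ B] by metis
    qed
  qed
  show ?thesis using h0 dv ab big by blast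
qed

context comp begin

lemma cycles_all: assumes p: "p \<in> C" and \<delta>: "\<delta> > 0"
  shows "\<exists>k0. \<forall>k\<ge>k0. chain_in f C \<delta> p p (k * m \<delta>)"
proof -
  define S where "S = {k. chain_in f C \<delta> p p k}"
  obtain s0 where s0: "s0 \<in> S" using cyc_ex[OF p \<delta>] unfolding S_def by auto
  have add: "\<And>a b. a \<in> S \<Longrightarrow> b \<in> S \<Longrightarrow> a + b \<in> S" unfolding S_def using chain_cat by blast
  have pos: "\<And>a. a \<in> S \<Longrightarrow> a > 0" unfolding S_def using chain_ends by fastforce
  obtain h a b k0 where h: "h > 0" "\<forall>s\<in>S. h dvd s" "a \<in> S" "b \<in> S" "a = b + h" "\<forall>k\<ge>k0. k * h \<in> S"
    using semigroup_lemma[OF add pos s0] by metis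
  have "m \<delta> dvd a" "m \<delta> dvd b" using h(3,4) m_dvd unfolding S_def by auto
  then have mh: "m \<delta> dvd h" using h(5) by (simp add: dvd_add_right_iff)
  have hm: "h dvd m \<delta>" unfolding cyc_gcd_def
  proof (rule Gcd_greatest)
    fix \<beta> assume "\<beta> \<in> {k. \<exists>x. chain_in f C \<delta> x x k}"
    then obtain c where c: "chain_in f C \<delta> c c \<beta>" by auto
    have cC: "c \<in> C" using chain_ends[OF c] by auto
    obtain \<alpha> where \<alpha>: "chain_in f C \<delta> p c \<alpha>" using ICT[OF C p cC \<delta>] by auto
    obtain \<alpha>' where \<alpha>': "chain_in f C \<delta> c p \<alpha>'" using ICT[OF C cC p \<delta>] by auto
    have "\<alpha> + \<alpha>' \<in> S" unfolding S_def using chain_cat[OF \<alpha> \<alpha>'] by simp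
    moreover have "\<alpha> + \<beta> + \<alpha>' \<in> S" unfolding S_def using chain_cat[OF chain_cat[OF \<alpha> c] \<alpha>'] by simp
    ultimately have "h dvd \<alpha> + \<alpha>'" "h dvd \<beta> + (\<alpha> + \<alpha>')" using h(2) by (auto simp: ac_simps)
    then show "h dvd \<beta>" by (simp add: dvd_add_left_iff)
  qed
  have "h = m \<delta>" using mh hm by (simp add: dvd_antisym)
  then show ?thesis using h(6) unfolding S_def by auto
qed

lemma net_bound: assumes p: "p \<in> C" and \<delta>: "\<delta> > 0"
  shows "\<exists>B. \<forall>q\<in>C. \<exists>ll. ll \<le> B \<and> chain_in f C \<delta> p q ll"
proof -
  have cC: "compact C" using compact_Int_closed[OF cpt comp_closed[OF C]] by simp
  have cov: "C \<subseteq> (\<Union>c\<in>C. ball c (\<delta>/2))" using \<delta> by force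
  obtain T where T: "T \<subseteq> C" "finite T" "C \<subseteq> (\<Union>c\<in>T. ball c (\<delta>/2))"
    using compactE_image[OF cC _ cov] by blast
  have "\<forall>c\<in>T. \<exists>ll. chain_in f C (\<delta>/2) p c ll" using ICT[OF C p] T(1) \<delta> by (meson half_gt_zero subsetD)
  then obtain ll where ll: "\<And>c. c \<in> T \<Longrightarrow> chain_in f C (\<delta>/2) p c (ll c)" by metis
  have "\<forall>q\<in>C. \<exists>l. l \<le> Max (ll ` T) \<and> chain_in f C \<delta> p q l"
  proof
    fix q assume q: "q \<in> C"
    then obtain c where c: "c \<in> T" "dist c q < \<delta>/2" using T(3) by auto
    have "chain_in f C (\<delta>/2 + \<delta>/2) p q (ll c)" by (rule chain_replace_last[OF ll[OF c(1)] q]) (use c in auto)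
    moreover have "ll c \<le> Max (ll ` T)" using T(2) c(1) by auto
    ultimately show "\<exists>l. l \<le> Max (ll ` T) \<and> chain_in f C \<delta> p q l" by auto
  qed
  then show ?thesis by blast
qed

lemma EL: assumes p: "p \<in> C" and \<delta>: "\<delta> > 0"
  shows "\<exists>K. \<forall>q\<in>C. \<forall>L\<ge>K. \<forall>ll w. chain_in f C \<delta> p q ll \<and> m \<delta> dvd w \<and> ll = L + w \<longrightarrow> chain_in f C \<delta> p q L"
proof -
  obtain k0 where k0: "\<And>k. k \<ge> k0 \<Longrightarrow> chain_in f C \<delta> p p (k * m \<delta>)" using cycles_all[OF p \<delta>] by auto
  obtain B where B: "\<And>q. q \<in> C \<Longrightarrow> \<exists>ll. ll \<le> B \<and> chain_in f C \<delta> p q ll" using net_bound[OF p \<delta>] by auto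
  have mp: "m \<delta> > 0" by (rule m_pos[OF \<delta>])
  show ?thesis
  proof (intro exI[of _ "B + k0 * m \<delta>"] ballI allI impI, elim conjE)
    fix q L ll w assume q: "q \<in> C" and L: "L \<ge> B + k0 * m \<delta>" and ch: "chain_in f C \<delta> p q ll"
      and w: "m \<delta> dvd w" and lw: "ll = L + w"
    obtain ll' where ll': "ll' \<le> B" "chain_in f C \<delta> p q ll'" using B[OF q] by auto
    obtain l where l: "chain_in f C \<delta> q p l" "m \<delta> dvd ll' + l" using back_chain[OF ll'(2) \<delta>] by auto
    have "m \<delta> dvd ll + l" by (rule m_dvd, rule chain_cat[OF ch l(1)])
    then have "m \<delta> dvd w + (L + l)" using lw by (simp add: ac_simps)
    then have Ll: "m \<delta> dvd L + l" using w by (simp add: dvd_add_right_iff)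
    have "L + l = (L - ll') + (ll' + l)" using ll'(1) L by simp
    then have "m \<delta> dvd (L - ll')" using Ll l(2) by (metis dvd_add_left_iff)
    then obtain t where t: "L - ll' = t * m \<delta>" by (metis dvd_def mult.commute)
    have "t * m \<delta> \<ge> k0 * m \<delta>" using t L ll'(1) by linarith
    then have "t \<ge> k0" using mp by simp
    then have "chain_in f C \<delta> p q (t * m \<delta> + ll')" using chain_cat[OF k0 ll'(2)] by blast
    moreover have "t * m \<delta> + ll' = L" using t ll'(1) L by linarith
    ultimately show "chain_in f C \<delta> p q L" by simp
  qed
qed

end

lemma infdist_lt: assumes "A \<noteq> {}" "infdist x A < d" shows "\<exists>a\<in>A. dist x a < d"
proof -
  have "bdd_below ((\<lambda>a. dist x a) ` A)" by (rule bdd_belowI[of _ 0]) auto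
  then show ?thesis using assms unfolding infdist_def by (auto simp: cINF_less_iff)
qed

lemma squeeze0: assumes "\<And>i. 0 \<le> g i" "\<And>i. g i \<le> h i" "h \<longlonglongrightarrow> 0" shows "g \<longlonglongrightarrow> (0::real)"
  by (rule tendsto_sandwich[of "\<lambda>_. 0" g sequentially h]) (use assms in auto)

context comp begin

lemma Rd_sub: "\<delta> > 0 \<Longrightarrow> Rinf \<subseteq> Rd \<delta>" unfolding Rinf_def Rd_def by auto

lemma ASYM:
  assumes x0: "x0 \<in> C" and c: "c \<in> Rinf `` {x0}" and lim: "(\<lambda>i. dist ((f ^^ i) z) ((f ^^ i) c)) \<longlonglongrightarrow> 0"
  shows "z \<in> Vs f C (Rinf `` {x0})"
proof -
  have cC: "c \<in> C" using c Rinf_class_sub by auto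
  have ws: "z \<in> Ws f C" unfolding Ws_def
  proof (simp, rule squeeze0[OF infdist_nonneg])
    fix i
    have "infdist ((f ^^ i) z) C \<le> infdist ((f ^^ i) c) C + dist ((f ^^ i) z) ((f ^^ i) c)"
      by (rule infdist_triangle)
    also have "infdist ((f ^^ i) c) C = 0" using comp_iter[OF C cC] by simp
    finally show "infdist ((f ^^ i) z) C \<le> dist ((f ^^ i) z) ((f ^^ i) c)" by simp
  qed (rule lim)
  have "(\<lambda>i. infdist ((f ^^ i) z) ((f ^^ i) ` D_sub f C (Rinf `` {x0}) \<delta>)) \<longlonglongrightarrow> 0" if \<delta>: "\<delta> > 0" for \<delta>
  proof (rule squeeze0[OF infdist_nonneg])
    fix i
    have "c \<in> D_sub f C (Rinf `` {x0}) \<delta>" using D_sub_eq[OF x0 \<delta>] Rd_sub[OF \<delta>] c by auto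
    then have h0: "infdist ((f ^^ i) c) ((f ^^ i) ` D_sub f C (Rinf `` {x0}) \<delta>) = 0" by simp
    have "infdist ((f ^^ i) z) ((f ^^ i) ` D_sub f C (Rinf `` {x0}) \<delta>) \<le>
      infdist ((f ^^ i) c) ((f ^^ i) ` D_sub f C (Rinf `` {x0}) \<delta>) + dist ((f ^^ i) z) ((f ^^ i) c)"
      by (rule infdist_triangle)
    then show "infdist ((f ^^ i) z) ((f ^^ i) ` D_sub f C (Rinf `` {x0}) \<delta>) \<le> dist ((f ^^ i) z) ((f ^^ i) c)"
      using h0 by simp
  qed (rule lim)
  then show ?thesis using ws unfolding Vs_def by auto
qed

lemma CORE:
  assumes x0: "x0 \<in> C" and y: "y \<in> Vs f C (Rinf `` {x0})" and c: "c \<in> Rinf `` {x0}"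
    and sh: "s_limit_shadowing f" and \<epsilon>: "\<epsilon> > 0"
  shows "\<exists>z. dist z y \<le> \<epsilon> \<and> (\<lambda>i. dist ((f ^^ i) z) ((f ^^ i) c)) \<longlonglongrightarrow> 0"
proof -
  obtain \<delta> where \<delta>: "\<delta> > 0" and shd: "\<forall>xs. (\<forall>i. dist (f (xs i)) (xs (Suc i)) \<le> \<delta>) \<and>
      (\<lambda>i. dist (f (xs i)) (xs (Suc i))) \<longlonglongrightarrow> 0 \<longrightarrow>
      (\<exists>x. (\<forall>i. dist ((f ^^ i) x) (xs i) \<le> \<epsilon>) \<and> (\<lambda>i. dist ((f ^^ i) x) (xs i)) \<longlonglongrightarrow> 0)"
    using sh \<epsilon> unfolding s_limit_shadowing_def by blast
  define Ed where "Ed = Rd \<delta> `` {x0}"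
  have cC: "c \<in> C" using c Rinf_class_sub by auto
  have EdC: "Ed \<subseteq> C" unfolding Ed_def Rd_def rel_delta_def by auto
  have x0Ed: "x0 \<in> Ed" unfolding Ed_def by (rule equiv_class_self[OF rel_equiv[OF \<delta>] x0])
  have "(\<lambda>i. infdist ((f ^^ i) y) ((f ^^ i) ` Ed)) \<longlonglongrightarrow> 0"
    using y \<delta> D_sub_eq[OF x0 \<delta>] unfolding Vs_def Ed_def by auto
  then have "eventually (\<lambda>i. infdist ((f ^^ i) y) ((f ^^ i) ` Ed) < \<delta>) sequentially"
    using \<delta> by (rule order_tendstoD(2))
  then obtain N where "\<forall>i\<ge>N. infdist ((f ^^ i) y) ((f ^^ i) ` Ed) < \<delta>"
    unfolding eventually_sequentially by blast
  then have N: "infdist ((f ^^ (N+1)) y) ((f ^^ (N+1)) ` Ed) < \<delta>" by (metis le_add1)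
  obtain e where e: "e \<in> Ed" "dist ((f ^^ (N+1)) y) ((f ^^ (N+1)) e) < \<delta>"
    using infdist_lt[OF _ N] x0Ed by blast
  have eC: "e \<in> C" using e EdC by auto
  define p where "p = (f ^^ (N+1)) e"
  have pC: "p \<in> C" unfolding p_def by (rule comp_iter[OF C eC])
  obtain K where K: "\<And>q L ll w. q \<in> C \<Longrightarrow> L \<ge> K \<Longrightarrow> chain_in f C \<delta> p q ll \<Longrightarrow> m \<delta> dvd w \<Longrightarrow> ll = L + w
      \<Longrightarrow> chain_in f C \<delta> p q L"
    using EL[OF pC \<delta>] by blast
  define L where "L = max K 1"
  define T where "T = N + 1 + L"
  obtain u where u: "chain_in f C \<delta> p e u" using ICT[OF C pC eC \<delta>] by auto
  have orb: "chain_in f C \<delta> e p (N+1)" unfolding p_def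
    by (rule chain_orbit) (use \<delta> comp_iter[OF C eC] in auto)
  have mu: "m \<delta> dvd u + (N+1)" by (rule m_dvd, rule chain_cat[OF u orb])
  have "(x0, e) \<in> Rd \<delta>" "(x0, c) \<in> Rd \<delta>" using e(1) c Rd_sub[OF \<delta>] unfolding Ed_def by auto
  then have "(e, c) \<in> Rd \<delta>" using rel_equiv[OF \<delta>] by (meson equivE symD transD)
  then obtain v where v: "chain_in f C \<delta> e c v" "m \<delta> dvd v" unfolding Rd_def rel_delta_def by auto
  have T1: "T \<ge> 1" unfolding T_def by simp
  have orb2: "chain_in f C \<delta> c ((f ^^ T) c) T"
    by (rule chain_orbit) (use \<delta> comp_iter[OF C cC] T1 in auto)
  have long: "chain_in f C \<delta> p ((f ^^ T) c) (u + v + T)" by (rule chain_cat[OF chain_cat[OF u v(1)] orb2])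
  have "chain_in f C \<delta> p ((f ^^ T) c) L"
  proof (rule K[OF comp_iter[OF C cC] _ long])
    show "K \<le> L" unfolding L_def by simp
    show "m \<delta> dvd u + (N + 1) + v" using dvd_add[OF mu v(2)] by simp
    show "u + v + T = L + (u + (N + 1) + v)" unfolding T_def by simp
  qed
  then obtain ws where ws: "ws 0 = p" "ws L = (f ^^ T) c"
    "\<And>i. i < L \<Longrightarrow> dist (f (ws i)) (ws (Suc i)) \<le> \<delta>" by (auto elim: chain_inE)
  define xs where "xs i = (if i \<le> N then (f ^^ i) y else if i \<le> T then ws (i - (N+1)) else (f ^^ i) c)" for i
  have err: "dist (f (xs i)) (xs (Suc i)) \<le> (if i < T then \<delta> else 0)" for i
  proof -
    consider "i < N" | "i = N" | "N < i" "i < T" | "i \<ge> T" by linarith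
    then show ?thesis
    proof cases
      case 1 then show ?thesis using \<delta> by (simp add: xs_def T_def)
    next
      case 2 then show ?thesis using e(2) ws(1) unfolding p_def xs_def T_def by (simp add: less_imp_le)
    next
      case 3
      define t where "t = i - (N + 1)"
      have t: "i = N + 1 + t" "t < L" using 3 unfolding t_def T_def by auto
      have "Suc i - (N+1) = Suc t" using t by simp
      then show ?thesis using 3 ws(3)[OF t(2)] t unfolding xs_def T_def by auto
    next
      case 4
      have "f (xs i) = xs (Suc i)"
      proof (cases "i = T")
        case True then show ?thesis using ws(2) unfolding xs_def T_def by simp
      next
        case False then show ?thesis using 4 unfolding xs_def T_def by simp
      qed
      then show ?thesis using 4 by simp
    qed
  qed
  have err1: "\<forall>i. dist (f (xs i)) (xs (Suc i)) \<le> \<delta>"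
  proof
    fix i show "dist (f (xs i)) (xs (Suc i)) \<le> \<delta>" using err[of i] \<delta> by (auto split: if_splits)
  qed
  have err0: "(\<lambda>i. dist (f (xs i)) (xs (Suc i))) \<longlonglongrightarrow> 0"
  proof (rule tendsto_eventually)
    show "\<forall>\<^sub>F i in sequentially. dist (f (xs i)) (xs (Suc i)) = 0"
      unfolding eventually_sequentially
    proof (intro exI[of _ T] allI impI)
      fix i assume "i \<ge> T"
      then have "dist (f (xs i)) (xs (Suc i)) \<le> 0" using err[of i] by simp
      then show "dist (f (xs i)) (xs (Suc i)) = 0" by (metis antisym zero_le_dist)
    qed
  qed
  obtain z where z: "\<And>i. dist ((f ^^ i) z) (xs i) \<le> \<epsilon>" "(\<lambda>i. dist ((f ^^ i) z) (xs i)) \<longlonglongrightarrow> 0"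
    using shd err1 err0 by blast
  have "dist z y \<le> \<epsilon>" using z(1)[of 0] by (simp add: xs_def)
  moreover have "(\<lambda>i. dist ((f ^^ i) z) ((f ^^ i) c)) \<longlonglongrightarrow> 0"
  proof (rule Lim_transform_eventually[OF z(2)])
    show "\<forall>\<^sub>F i in sequentially. dist ((f ^^ i) z) (xs i) = dist ((f ^^ i) z) ((f ^^ i) c)"
      unfolding eventually_sequentially
      by (rule exI[of _ "Suc T"]) (auto simp: xs_def T_def)
  qed
  ultimately show ?thesis by blast
qed

end

lemma multi_subseq:
  fixes s :: "nat \<Rightarrow> nat \<Rightarrow> 'a::metric_space"
  assumes cpt: "compact (UNIV :: 'a set)"
  shows "\<exists>r. strict_mono r \<and> (\<forall>j<n. \<exists>l. (\<lambda>k. s j (r k)) \<longlonglongrightarrow> l)"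
proof (induction n)
  case 0 then show ?case by (rule exI[of _ id]) (simp add: strict_mono_def)
next
  case (Suc n)
  then obtain r where r: "strict_mono r" "\<forall>j<n. \<exists>l. (\<lambda>k. s j (r k)) \<longlonglongrightarrow> l" by blast
  obtain l r2 where r2: "strict_mono r2" "((\<lambda>k. s n (r k)) \<circ> r2) \<longlonglongrightarrow> l"
    using compact_imp_seq_compact[OF cpt] unfolding seq_compact_def by blast
  have sm: "strict_mono (r \<circ> r2)" using r(1) r2(1) by (simp add: strict_mono_def)
  have cv: "\<exists>l. (\<lambda>k. s j ((r \<circ> r2) k)) \<longlonglongrightarrow> l" if "j < Suc n" for j
  proof (cases "j = n")
    case True then show ?thesis using r2(2) by (auto simp: o_def)
  next
    case False
    have "j < n" using that False by simp
    then obtain l' where "(\<lambda>k. s j (r k)) \<longlonglongrightarrow> l'" using r(2) by blast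
    from LIMSEQ_subseq_LIMSEQ[OF this r2(1)] show ?thesis by (auto simp: o_def)
  qed
  show ?case
  proof (intro exI[of _ "r \<circ> r2"] conjI allI impI)
    show "strict_mono (r \<circ> r2)" by (rule sm)
    fix j :: nat assume "j < Suc n"
    then show "\<exists>l. (\<lambda>k. s j ((r \<circ> r2) k)) \<longlonglongrightarrow> l" by (rule cv)
  qed
qed

context comp begin

lemma align:
  fixes n :: nat and a :: "nat \<Rightarrow> 'a"
  assumes \<delta>: "\<delta> > 0" and d0: "d0 \<in> C" and x0: "x0 \<in> C" and a: "\<forall>j<n. a j \<in> Rinf `` {d0}"
  shows "\<exists>T. \<forall>j<n. (x0, (f ^^ T) (a j)) \<in> Rd \<delta>"
proof -
  obtain L where L: "chain_in f C \<delta> d0 x0 L" using ICT[OF C d0 x0 \<delta>] by auto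
  have L1: "L \<ge> 1" using chain_ends[OF L] by auto
  have eq: "equiv C (Rd \<delta>)" by (rule rel_equiv[OF \<delta>])
  have "(x0, (f ^^ L) (a j)) \<in> Rd \<delta>" if j: "j < n" for j
  proof -
    have ajD: "(d0, a j) \<in> Rd \<delta>" using a j Rd_sub[OF \<delta>] by auto
    then have "(a j, d0) \<in> Rd \<delta>" using eq by (meson equivE symD)
    then obtain p where p: "chain_in f C \<delta> (a j) d0 p" "m \<delta> dvd p" unfolding Rd_def rel_delta_def by auto
    have ajC: "a j \<in> C" using chain_ends[OF p(1)] by auto
    have ajx: "chain_in f C \<delta> (a j) x0 (p + L)" by (rule chain_cat[OF p(1) L])
    have fC: "(f ^^ L) (a j) \<in> C" by (rule comp_iter[OF C ajC])
    obtain c where c: "chain_in f C \<delta> ((f ^^ L) (a j)) x0 c" using ICT[OF C fC x0 \<delta>] by auto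
    obtain q where q: "chain_in f C \<delta> x0 (a j) q" using ICT[OF C x0 ajC \<delta>] by auto
    have orb: "chain_in f C \<delta> (a j) ((f ^^ L) (a j)) L"
      by (rule chain_orbit) (use \<delta> L1 comp_iter[OF C ajC] in auto)
    have c1: "m \<delta> dvd p + L + q" by (rule m_dvd, rule chain_cat[OF ajx q])
    have c2: "m \<delta> dvd L + c + q" by (rule m_dvd, rule chain_cat[OF chain_cat[OF orb c] q])
    have "m \<delta> dvd p + (L + q)" using c1 by (simp add: ac_simps)
    then have "m \<delta> dvd L + q" using p(2) by (simp add: dvd_add_right_iff)
    moreover have "m \<delta> dvd c + (L + q)" using c2 by (simp add: ac_simps)
    ultimately have "m \<delta> dvd c" by (simp add: dvd_add_left_iff)
    then have "((f ^^ L) (a j), x0) \<in> Rd \<delta>" using c fC x0 unfolding Rd_def rel_delta_def by auto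
    then show ?thesis using eq by (meson equivE symD)
  qed
  then show ?thesis by blast
qed

lemma limit_tuple:
  fixes n :: nat and a :: "nat \<Rightarrow> 'a"
  assumes d0: "d0 \<in> C" and x0: "x0 \<in> C" and a: "\<forall>j<n. a j \<in> Rinf `` {d0}"
    and dis: "\<And>i j l. j < l \<Longrightarrow> l < n \<Longrightarrow> dist ((f ^^ i) (a j)) ((f ^^ i) (a l)) \<ge> da"
  shows "\<exists>b. (\<forall>j<n. b j \<in> Rinf `` {x0}) \<and>
     (\<forall>i j l. j < l \<longrightarrow> l < n \<longrightarrow> dist ((f ^^ i) (b j)) ((f ^^ i) (b l)) \<ge> da)"
proof -
  have ex1: "\<forall>k. \<exists>T. \<forall>j<n. (x0, (f ^^ T) (a j)) \<in> Rd (1 / Suc k)"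
    using align[OF _ d0 x0 a] by simp
  obtain T where T0: "\<forall>k. \<forall>j<n. (x0, (f ^^ T k) (a j)) \<in> Rd (1 / Suc k)"
    using choice[OF ex1] by blast
  have T: "\<And>k j. j < n \<Longrightarrow> (x0, (f ^^ T k) (a j)) \<in> Rd (1 / Suc k)" using T0 by blast
  define s where "s j k = (f ^^ T k) (a j)" for j k
  obtain r where r: "strict_mono r" "\<forall>j<n. \<exists>l. (\<lambda>k. s j (r k)) \<longlonglongrightarrow> l"
    using multi_subseq[OF cpt, where s=s and n=n] by blast
  then have ex2: "\<forall>j. \<exists>l. j < n \<longrightarrow> (\<lambda>k. s j (r k)) \<longlonglongrightarrow> l" by blast
  obtain b where b0: "\<forall>j. j < n \<longrightarrow> (\<lambda>k. s j (r k)) \<longlonglongrightarrow> b j"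
    using choice[OF ex2] by blast
  have b: "\<And>j. j < n \<Longrightarrow> (\<lambda>k. s j (r k)) \<longlonglongrightarrow> b j" using b0 by blast
  have sC: "s j k \<in> C" if "j < n" for j k
    using T[OF that, of k] unfolding s_def Rd_def rel_delta_def by auto
  have bC: "b j \<in> C" if j: "j < n" for j
    by (rule closed_sequentially[OF comp_closed[OF C] _ b[OF j]]) (use sC j in auto)
  have bE: "b j \<in> Rinf `` {x0}" if j: "j < n" for j
  proof -
    have "rel_delta f C \<delta> x0 (b j)" if \<delta>: "\<delta> > 0" for \<delta>
    proof -
      obtain d where d: "d > 0" "\<forall>x y. dist x y < d \<longrightarrow> dist (f x) (f y) < \<delta>/2"
        using ucont[of "\<delta>/2"] \<delta> by auto
      have ev1: "eventually (\<lambda>k. dist (s j (r k)) (b j) < d) sequentially"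
        using b[OF j] d(1) unfolding tendsto_iff by simp
      obtain N0 where "inverse (real (Suc N0)) < \<delta>/2" using reals_Archimedean half_gt_zero[OF \<delta>] by blast
      then have N0: "1 / real (Suc N0) < \<delta>/2" by (simp add: inverse_eq_divide)
      have ev2: "eventually (\<lambda>k. 1 / real (Suc (r k)) \<le> \<delta>/2) sequentially"
        unfolding eventually_sequentially
      proof (intro exI[of _ N0] allI impI)
        fix k assume "k \<ge> N0"
        then have "r k \<ge> N0" using seq_suble[OF r(1), of k] by simp
        then have "1 / real (Suc (r k)) \<le> 1 / real (Suc N0)" by (simp add: frac_le)
        then show "1 / real (Suc (r k)) \<le> \<delta>/2" using N0 by simp
      qed
      obtain k where k: "dist (s j (r k)) (b j) < d" "1 / real (Suc (r k)) \<le> \<delta>/2"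
        using eventually_happens[OF eventually_conj[OF ev1 ev2]] by auto
      define \<delta>k where "\<delta>k = 1 / real (Suc (r k))"
      have \<delta>k: "\<delta>k > 0" "\<delta>k \<le> \<delta>/2" using k(2) by (auto simp: \<delta>k_def)
      have "(x0, s j (r k)) \<in> Rd \<delta>k" using T[OF j, of "r k"] unfolding s_def \<delta>k_def by simp
      then have "(s j (r k), x0) \<in> Rd \<delta>k" using rel_equiv[OF \<delta>k(1)] by (meson equivE symD)
      then obtain ll where ll: "chain_in f C \<delta>k (s j (r k)) x0 ll" "m \<delta>k dvd ll"
        unfolding Rd_def rel_delta_def by auto
      have "m \<delta> dvd m \<delta>k" by (rule m_mono) (use \<delta>k in auto)
      then have mdl: "m \<delta> dvd ll" using ll(2) by (rule dvd_trans)
      have "chain_in f C (\<delta>/2) (s j (r k)) x0 ll" using chain_mono[OF ll(1) _ \<delta>k(2)] by simp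
      moreover have "dist (f (b j)) (f (s j (r k))) \<le> \<delta>/2" using d k(1) by (metis dist_commute less_imp_le)
      ultimately have "chain_in f C (\<delta>/2 + \<delta>/2) (b j) x0 ll" using chain_replace_first bC[OF j] by blast
      then have "rel_delta f C \<delta> (b j) x0" using mdl bC[OF j] x0 unfolding rel_delta_def by auto
      then have "(b j, x0) \<in> Rd \<delta>" unfolding Rd_def by simp
      then have "(x0, b j) \<in> Rd \<delta>" using rel_equiv[OF \<delta>] by (meson equivE symD)
      then show ?thesis unfolding Rd_def by simp
    qed
    then show ?thesis unfolding Rinf_def using x0 bC[OF j] by auto
  qed
  have bd: "dist ((f ^^ i) (b j)) ((f ^^ i) (b l)) \<ge> da" if jl: "j < l" "l < n" for i j l
  proof -
    have cf: "isCont (f ^^ i) x" for x using cont_iter[of i] continuous_on_eq_continuous_at by blast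
    have lim: "(\<lambda>k. dist ((f ^^ i) (s j (r k))) ((f ^^ i) (s l (r k)))) \<longlonglongrightarrow> dist ((f ^^ i) (b j)) ((f ^^ i) (b l))"
      by (intro tendsto_dist isCont_tendsto_compose[OF cf] b) (use jl in auto)
    have "da \<le> dist ((f ^^ i) (s j (r k))) ((f ^^ i) (s l (r k)))" for k
      using dis[OF jl, of "i + T (r k)"] unfolding s_def by (simp add: funpow_add)
    then show ?thesis using LIMSEQ_le_const[OF lim] by blast
  qed
  show ?thesis using bE bd by blast
qed

end

lemma cmap_dist:
  fixes g h :: "'b \<Rightarrow> 'a::metric_space"
  assumes "continuous_map X euclidean g" "continuous_map X euclidean h"
  shows "continuous_map X euclideanreal (\<lambda>x. dist (g x) (h x))"
  using assms by (simp add: continuous_map_atin tendsto_dist)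

lemma prod_map_iter:
  assumes "z \<in> PiE {..<n} (\<lambda>_. UNIV)"
  shows "(prod_map f n ^^ i) z = restrict (\<lambda>j. (f ^^ i) (z j)) {..<n}"
proof (induction i)
  case 0 then show ?case using assms by (simp add: PiE_restrict)
next
  case (Suc i)
  have "(prod_map f n ^^ Suc i) z = prod_map f n ((prod_map f n ^^ i) z)" by simp
  also have "\<dots> = prod_map f n (restrict (\<lambda>j. (f ^^ i) (z j)) {..<n})" using Suc.IH by (simp only:)
  also have "\<dots> = restrict (\<lambda>j. (f ^^ Suc i) (z j)) {..<n}" by (auto simp: prod_map_def fun_eq_iff)
  finally show ?case .
qed

definition Pairs :: "nat \<Rightarrow> (nat \<times> nat) set" where "Pairs n = {(j, k). j < k \<and> k < n}"

lemma Pairs_fin: "finite (Pairs n)"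
  by (rule finite_subset[of _ "{..<n} \<times> {..<n}"]) (auto simp: Pairs_def)

lemma Pairs_ne: assumes "n \<ge> 2" shows "Pairs n \<noteq> {}"
proof -
  have "(0, 1) \<in> Pairs n" using assms by (simp add: Pairs_def)
  then show ?thesis by auto
qed

lemma pair_dists_img: "pair_dists f n x i = (\<lambda>(j, k). dist ((f ^^ i) (x j)) ((f ^^ i) (x k))) ` Pairs n"
  unfolding pair_dists_def Pairs_def by auto

lemma pd_fin: "finite (pair_dists f n x i)" by (simp add: pair_dists_img Pairs_fin)
lemma pd_ne: "n \<ge> 2 \<Longrightarrow> pair_dists f n x i \<noteq> {}" by (simp add: pair_dists_img Pairs_ne)

lemma pd_restrict:
  "pair_dists f n (restrict (\<lambda>j. (f ^^ i) (z j)) {..<n}) 0 = pair_dists f n z i"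
  unfolding pair_dists_img by (rule image_cong[OF refl]) (auto simp: Pairs_def)

lemma Min_pd_gt: assumes "n \<ge> 2" shows "(r < Min (pair_dists f n x i)) =
   (\<forall>j k. j < k \<longrightarrow> k < n \<longrightarrow> r < dist ((f ^^ i) (x j)) ((f ^^ i) (x k)))"
proof -
  have "(r < Min (pair_dists f n x i)) = (\<forall>a \<in> pair_dists f n x i. r < a)"
    by (rule Min_gr_iff[OF pd_fin pd_ne[OF assms]])
  then show ?thesis unfolding pair_dists_def by blast
qed

lemma Max_pd_lt: assumes "n \<ge> 2" shows "(Max (pair_dists f n x i) < r) =
   (\<forall>j k. j < k \<longrightarrow> k < n \<longrightarrow> dist ((f ^^ i) (x j)) ((f ^^ i) (x k)) < r)"
proof -
  have "(Max (pair_dists f n x i) < r) = (\<forall>a \<in> pair_dists f n x i. a < r)"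
    by (rule Max_less_iff[OF pd_fin pd_ne[OF assms]])
  then show ?thesis unfolding pair_dists_def by blast
qed

lemma open_pairs:
  assumes n: "n \<ge> 2" and op: "open Op"
  shows "openin (prod_top n :: (nat \<Rightarrow> 'a::metric_space) topology) {w \<in> topspace (prod_top n). \<forall>j k. j < k \<longrightarrow> k < n \<longrightarrow> dist (w j) (w k) \<in> Op}"
proof -
  define V where "V p = {w \<in> topspace (prod_top n :: (nat \<Rightarrow> 'a) topology). dist (w (fst p)) (w (snd p)) \<in> Op}" for p
  have "openin (prod_top n) (V p)" if p: "p \<in> Pairs n" for p
  proof -
    have "fst p \<in> {..<n}" "snd p \<in> {..<n}" using p by (auto simp: Pairs_def)
    then have "continuous_map (prod_top n) euclideanreal (\<lambda>w. dist (w (fst p)) (w (snd p)))"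
      unfolding prod_top_def by (intro cmap_dist continuous_map_product_projection)
    then show ?thesis unfolding V_def using op by (intro openin_continuous_map_preimage) auto
  qed
  then have "openin (prod_top n) (\<Inter> (V ` Pairs n))"
    using Pairs_fin Pairs_ne[OF n] by (intro openin_Inter) auto
  moreover have "\<Inter> (V ` Pairs n) = {w \<in> topspace (prod_top n). \<forall>j k. j < k \<longrightarrow> k < n \<longrightarrow> dist (w j) (w k) \<in> Op}"
    using Pairs_ne[OF n] unfolding V_def Pairs_def by auto
  ultimately show ?thesis by simp
qed

lemma cofinite_in:
  assumes "furstenberg_family F" "full_family F" "{i. i \<ge> M} \<subseteq> A"
  shows "A \<in> F"
proof -
  obtain B where "B \<in> F" using assms(1) unfolding furstenberg_family_def by auto
  then have "UNIV \<in> F" using assms(1) unfolding furstenberg_family_def by blast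
  then have "{i \<in> UNIV. i \<ge> M} \<in> F" using assms(2) unfolding full_family_def by blast
  then show ?thesis using assms(1,3) unfolding furstenberg_family_def by auto
qed

lemma box_nbhd:
  fixes y :: "nat \<Rightarrow> 'a::metric_space"
  assumes n: "n \<ge> 2" and W: "openin (prod_top n) W" and y: "y \<in> W"
  shows "\<exists>\<epsilon>>0. \<forall>z \<in> PiE {..<n} (\<lambda>_. UNIV). (\<forall>j<n. dist (z j) (y j) < \<epsilon>) \<longrightarrow> z \<in> W"
proof -
  obtain U where U: "\<forall>i\<in>{..<n}. openin euclidean (U i)" "y \<in> PiE {..<n} U" "PiE {..<n} U \<subseteq> W"
    using W y unfolding prod_top_def openin_product_topology_alt by blast
  have "\<forall>j. \<exists>e. j < n \<longrightarrow> e > 0 \<and> ball (y j) e \<subseteq> U j"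
  proof
    fix j show "\<exists>e. j < n \<longrightarrow> e > 0 \<and> ball (y j) e \<subseteq> U j"
    proof (cases "j < n")
      case True
      then have "open (U j)" "y j \<in> U j" using U(1,2) by (auto simp: PiE_iff)
      then show ?thesis using open_contains_ball by blast
    qed auto
  qed
  then obtain e where e: "\<And>j. j < n \<Longrightarrow> e j > 0 \<and> ball (y j) (e j) \<subseteq> U j" by metis
  define \<epsilon> where "\<epsilon> = Min (e ` {..<n})"
  have "0 \<in> {..<n}" using n by simp
  then have ne: "{..<n} \<noteq> {}" by blast
  have "\<epsilon> > 0" unfolding \<epsilon>_def using e ne by (subst Min_gr_iff) auto
  moreover have "z \<in> W" if z: "z \<in> PiE {..<n} (\<lambda>_. UNIV)" "\<forall>j<n. dist (z j) (y j) < \<epsilon>" for z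
  proof -
    have "z j \<in> U j" if j: "j < n" for j
    proof -
      have "\<epsilon> \<le> e j" unfolding \<epsilon>_def using j by simp
      moreover have "dist (z j) (y j) < \<epsilon>" using z(2) j by blast
      ultimately have "z j \<in> ball (y j) (e j)" by (simp add: dist_commute)
      then show ?thesis using e[OF j] by auto
    qed
    then have "z \<in> PiE {..<n} U" using z(1) by (auto simp: PiE_iff)
    then show ?thesis using U(3) by auto
  qed
  ultimately show ?thesis by blast
qed

lemma dense_sub:
  assumes "\<Inter>\<O> = A" "Ob \<in> \<O>" and dens: "\<forall>y\<in>P. \<forall>W. openin X W \<and> y \<in> W \<longrightarrow> (\<exists>z\<in>P. z \<in> A \<and> z \<in> W)"
    and P: "P \<subseteq> topspace X"
  shows "subtopology X P closure_of (Ob \<inter> P) = topspace (subtopology X P)"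
proof
  show "subtopology X P closure_of (Ob \<inter> P) \<subseteq> topspace (subtopology X P)" by (rule closure_of_subset_topspace)
  show "topspace (subtopology X P) \<subseteq> subtopology X P closure_of (Ob \<inter> P)"
  proof
    fix y assume y: "y \<in> topspace (subtopology X P)"
    then have yP: "y \<in> P" by simp
    have "\<exists>z\<in>Ob \<inter> P. z \<in> T" if T: "y \<in> T" "openin (subtopology X P) T" for T
    proof -
      obtain W where W: "openin X W" "T = W \<inter> P" using T(2) unfolding openin_subtopology by blast
      then obtain z where z: "z \<in> P" "z \<in> A" "z \<in> W" using dens yP T(1) by blast
      have "z \<in> Ob" using z(2) assms(1,2) by blast
      then show ?thesis using z W(2) by blast
    qed
    then show "y \<in> subtopology X P closure_of (Ob \<inter> P)" using y unfolding closure_of_def by blast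
  qed
qed

lemma arith_aux1: "(a::real) \<le> p + q \<Longrightarrow> q \<le> s + t \<Longrightarrow> p < e \<Longrightarrow> t < e \<Longrightarrow> da \<le> a \<Longrightarrow> e = (da - r) / 2 \<Longrightarrow> r < s"
proof -
  assume h: "(a::real) \<le> p + q" "q \<le> s + t" "p < e" "t < e" "da \<le> a" "e = (da - r) / 2"
  then have "2 * e = da - r" by simp
  with h show "r < s" by linarith
qed

lemma arith_aux2: "(s::real) \<le> p + q \<Longrightarrow> p < e \<Longrightarrow> q < e \<Longrightarrow> e = c / 2 \<Longrightarrow> s < c"
proof -
  assume h: "(s::real) \<le> p + q" "p < e" "q < e" "e = c / 2"
  then have "2 * e = c" by simp
  with h show "s < c" by linarith
qed

lemma gdelta_family:
  assumes "gdelta_in X A" obtains \<O> where "countable \<O>" "\<And>Ob. Ob \<in> \<O> \<Longrightarrow> openin X Ob" "\<Inter>\<O> = A"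
  using assms unfolding gdelta_in_alt intersection_of_def by blast

context comp begin

lemma dense_construct:
  assumes n: "n \<ge> 2" and x0: "x0 \<in> C" and sh: "s_limit_shadowing f"
    and c: "\<forall>j<n. c j \<in> Rinf `` {x0}"
    and y: "y \<in> PiE {..<n} (\<lambda>_. Vs f C (Rinf `` {x0}))"
    and W: "openin (prod_top n) W" "y \<in> W"
  shows "\<exists>z \<in> PiE {..<n} (\<lambda>_. Vs f C (Rinf `` {x0})). z \<in> W \<and>
     (\<forall>j<n. (\<lambda>i. dist ((f ^^ i) (z j)) ((f ^^ i) (c j))) \<longlonglongrightarrow> 0)"
proof -
  obtain \<epsilon> where \<epsilon>: "\<epsilon> > 0" and box: "\<And>z. z \<in> PiE {..<n} (\<lambda>_. UNIV) \<Longrightarrow> (\<forall>j<n. dist (z j) (y j) < \<epsilon>) \<Longrightarrow> z \<in> W"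
    using box_nbhd[OF n W] by blast
  have "\<forall>j. \<exists>z. j < n \<longrightarrow> dist z (y j) \<le> \<epsilon>/2 \<and> (\<lambda>i. dist ((f ^^ i) z) ((f ^^ i) (c j))) \<longlonglongrightarrow> 0"
  proof
    fix j show "\<exists>z. j < n \<longrightarrow> dist z (y j) \<le> \<epsilon>/2 \<and> (\<lambda>i. dist ((f ^^ i) z) ((f ^^ i) (c j))) \<longlonglongrightarrow> 0"
    proof (cases "j < n")
      case True
      have "y j \<in> Vs f C (Rinf `` {x0})" using y True by (auto simp: PiE_iff)
      then show ?thesis using CORE[OF x0 _ _ sh, of "y j" "c j" "\<epsilon>/2"] c True \<epsilon> by auto
    qed auto
  qed
  then obtain z' where z': "\<forall>j. j < n \<longrightarrow> dist (z' j) (y j) \<le> \<epsilon>/2 \<and> (\<lambda>i. dist ((f ^^ i) (z' j)) ((f ^^ i) (c j))) \<longlonglongrightarrow> 0"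
    by (rule choice[THEN exE]) blast
  define z where "z = restrict z' {..<n}"
  have zY: "z \<in> PiE {..<n} (\<lambda>_. Vs f C (Rinf `` {x0}))"
    unfolding z_def using ASYM[OF x0] c z' by (auto simp: PiE_iff)
  have "z \<in> W"
  proof (rule box)
    show "z \<in> PiE {..<n} (\<lambda>_. UNIV)" unfolding z_def by simp
    show "\<forall>j<n. dist (z j) (y j) < \<epsilon>" unfolding z_def using z' \<epsilon> by fastforce
  qed
  moreover have "\<forall>j<n. (\<lambda>i. dist ((f ^^ i) (z j)) ((f ^^ i) (c j))) \<longlonglongrightarrow> 0"
    unfolding z_def using z' by auto
  ultimately show ?thesis using zY by blast
qed

lemma main_comp:
  assumes n: "n \<ge> 2" and x0: "x0 \<in> C" and sh: "s_limit_shadowing f"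
    and F: "furstenberg_family F" "full_family F" "compatible F f n"
    and G: "furstenberg_family G" "full_family G" "compatible G f n"
    and b: "\<forall>j<n. b j \<in> Rinf `` {x0}"
    and bd: "\<And>i j l. j < l \<Longrightarrow> l < n \<Longrightarrow> dist ((f ^^ i) (b j)) ((f ^^ i) (b l)) \<ge> da"
    and r: "r < da"
  shows "generic_chaotic F G f n r (Vs f C (Rinf `` {x0}))"
proof -
  define Y where "Y = Vs f C (Rinf `` {x0})"
  define PY where "PY = PiE {..<n} (\<lambda>_. Y)"
  define X where "X = (prod_top n :: (nat \<Rightarrow> 'a) topology)"
  have tX: "topspace X = PiE {..<n} (\<lambda>_. UNIV)" unfolding X_def prod_top_def by simp
  have PYX: "PY \<subseteq> topspace X" unfolding tX PY_def by (auto simp: PiE_iff)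
  have x0E: "x0 \<in> Rinf `` {x0}" by (rule equiv_class_self[OF Rinf_equiv x0])
  have Yne: "Y \<noteq> {}" unfolding Y_def using ASYM[OF x0 x0E, of x0] by auto
  define Ur where "Ur = {w \<in> topspace X. \<forall>j k. j < k \<longrightarrow> k < n \<longrightarrow> dist (w j) (w k) \<in> {r<..}}"
  define Ve where "Ve k = {w \<in> topspace X. \<forall>j k'. j < k' \<longrightarrow> k' < n \<longrightarrow> dist (w j) (w k') \<in> {..<1 / real (Suc k)}}" for k
  have oUr: "openin X Ur" unfolding Ur_def X_def by (rule open_pairs[OF n]) simp
  have oVe: "openin X (Ve k)" for k unfolding Ve_def X_def by (rule open_pairs[OF n]) simp
  have iterX: "(prod_map f n ^^ i) z \<in> topspace X \<and> (\<forall>j<n. (prod_map f n ^^ i) z j = (f ^^ i) (z j))"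
    if "z \<in> topspace X" for z i
    using prod_map_iter[where z=z and n=n and f=f and i=i] that unfolding tX by (auto simp: PiE_iff)
  have SUr: "{i. (prod_map f n ^^ i) z \<in> Ur} = S_set f n z r" if z: "z \<in> topspace X" for z
    unfolding Ur_def S_set_def Min_pd_gt[OF n] using iterX[OF z] by auto
  have TVe: "{i. (prod_map f n ^^ i) z \<in> Ve k} = T_set f n z (1 / real (Suc k))" if z: "z \<in> topspace X" for z k
    unfolding Ve_def T_set_def Max_pd_lt[OF n] using iterX[OF z] by auto
  define AS where "AS = {z \<in> topspace X. {i. (prod_map f n ^^ i) z \<in> Ur} \<in> F}"
  define AT where "AT k = {z \<in> topspace X. {i. (prod_map f n ^^ i) z \<in> Ve k} \<in> G}" for k
  have gS: "gdelta_in X AS" using F(3) oUr unfolding compatible_def AS_def X_def by blast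
  have gT: "gdelta_in X (AT k)" for k using G(3) oVe unfolding compatible_def AT_def X_def by blast
  obtain OS where OS: "countable OS" "\<And>Ob. Ob \<in> OS \<Longrightarrow> openin X Ob" "\<Inter>OS = AS" using gdelta_family[OF gS] by blast
  have ex: "\<forall>k. \<exists>\<O>. countable \<O> \<and> (\<forall>Ob\<in>\<O>. openin X Ob) \<and> \<Inter>\<O> = AT k"
  proof
    fix k
    obtain \<O> where "countable \<O>" "\<And>Ob. Ob \<in> \<O> \<Longrightarrow> openin X Ob" "\<Inter>\<O> = AT k"
      using gdelta_family[OF gT[of k]] by blast
    then show "\<exists>\<O>. countable \<O> \<and> (\<forall>Ob\<in>\<O>. openin X Ob) \<and> \<Inter>\<O> = AT k" by blast
  qed
  obtain OT where OT0: "\<forall>k. countable (OT k) \<and> (\<forall>Ob\<in>OT k. openin X Ob) \<and> \<Inter>(OT k) = AT k"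
    using choice[OF ex] by blast
  have OT: "\<And>k. countable (OT k)" "\<And>k Ob. Ob \<in> OT k \<Longrightarrow> openin X Ob" "\<And>k. \<Inter>(OT k) = AT k"
    using OT0 by auto
  have densS: "\<forall>y\<in>PY. \<forall>W. openin X W \<and> y \<in> W \<longrightarrow> (\<exists>z\<in>PY. z \<in> AS \<and> z \<in> W)"
  proof (intro ballI allI impI, elim conjE)
    fix y W assume y: "y \<in> PY" and W: "openin X W" "y \<in> W"
    obtain z where z: "z \<in> PY" "z \<in> W" "\<forall>j<n. (\<lambda>i. dist ((f ^^ i) (z j)) ((f ^^ i) (b j))) \<longlonglongrightarrow> 0"
      using dense_construct[OF n x0 sh b, of y W] y W unfolding PY_def Y_def X_def by blast
    have zX: "z \<in> topspace X" using z(1) PYX by auto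
    define \<eta> where "\<eta> = (da - r) / 2"
    have \<eta>: "\<eta> > 0" using r by (simp add: \<eta>_def)
    have "\<forall>j\<in>{..<n}. eventually (\<lambda>i. dist ((f ^^ i) (z j)) ((f ^^ i) (b j)) < \<eta>) sequentially"
      using z(3) \<eta> unfolding tendsto_iff by simp
    then have "eventually (\<lambda>i. \<forall>j\<in>{..<n}. dist ((f ^^ i) (z j)) ((f ^^ i) (b j)) < \<eta>) sequentially"
      by (rule eventually_ball_finite[rotated]) simp
    then obtain M where M: "\<And>i j. i \<ge> M \<Longrightarrow> j < n \<Longrightarrow> dist ((f ^^ i) (z j)) ((f ^^ i) (b j)) < \<eta>"
      unfolding eventually_sequentially by auto
    have "{i. i \<ge> M} \<subseteq> S_set f n z r"
    proof
      fix i assume i: "i \<in> {i. i \<ge> M}"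
      have "r < dist ((f ^^ i) (z j)) ((f ^^ i) (z k))" if jk: "j < k" "k < n" for j k
      proof -
        have t1: "dist ((f ^^ i) (b j)) ((f ^^ i) (b k)) \<le> dist ((f ^^ i) (b j)) ((f ^^ i) (z j)) +
              dist ((f ^^ i) (z j)) ((f ^^ i) (b k))" by (rule dist_triangle)
        have t2: "dist ((f ^^ i) (z j)) ((f ^^ i) (b k)) \<le> dist ((f ^^ i) (z j)) ((f ^^ i) (z k)) +
              dist ((f ^^ i) (z k)) ((f ^^ i) (b k))" by (rule dist_triangle)
        note t1 t2
        moreover have "dist ((f ^^ i) (b j)) ((f ^^ i) (z j)) < \<eta>" using M[of i j] i jk by (simp add: dist_commute)
        moreover have "dist ((f ^^ i) (z k)) ((f ^^ i) (b k)) < \<eta>" using M[of i k] i jk by simp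
        moreover have "dist ((f ^^ i) (b j)) ((f ^^ i) (b k)) \<ge> da" by (rule bd[OF jk])
        ultimately show ?thesis using \<eta>_def by (rule arith_aux1)
      qed
      then show "i \<in> S_set f n z r" unfolding S_set_def Min_pd_gt[OF n] by auto
    qed
    then have "S_set f n z r \<in> F" by (rule cofinite_in[OF F(1,2)])
    then have "z \<in> AS" unfolding AS_def using SUr[OF zX] zX by simp
    then show "\<exists>z\<in>PY. z \<in> AS \<and> z \<in> W" using z by blast
  qed
  have densT: "\<forall>y\<in>PY. \<forall>W. openin X W \<and> y \<in> W \<longrightarrow> (\<exists>z\<in>PY. z \<in> AT k \<and> z \<in> W)" for k
  proof (intro ballI allI impI, elim conjE)
    fix y W assume y: "y \<in> PY" and W: "openin X W" "y \<in> W"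
    have c: "\<forall>j<n. (\<lambda>_. x0) j \<in> Rinf `` {x0}" using x0E by simp
    obtain z where z: "z \<in> PY" "z \<in> W" "\<forall>j<n. (\<lambda>i. dist ((f ^^ i) (z j)) ((f ^^ i) x0)) \<longlonglongrightarrow> 0"
      using dense_construct[OF n x0 sh c, of y W] y W unfolding PY_def Y_def X_def by auto
    have zX: "z \<in> topspace X" using z(1) PYX by auto
    define \<eta> where "\<eta> = 1 / real (Suc k) / 2"
    have \<eta>: "\<eta> > 0" by (simp add: \<eta>_def)
    have "\<forall>j\<in>{..<n}. eventually (\<lambda>i. dist ((f ^^ i) (z j)) ((f ^^ i) x0) < \<eta>) sequentially"
      using z(3) \<eta> unfolding tendsto_iff by simp
    then have "eventually (\<lambda>i. \<forall>j\<in>{..<n}. dist ((f ^^ i) (z j)) ((f ^^ i) x0) < \<eta>) sequentially"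
      by (rule eventually_ball_finite[rotated]) simp
    then obtain M where M: "\<And>i j. i \<ge> M \<Longrightarrow> j < n \<Longrightarrow> dist ((f ^^ i) (z j)) ((f ^^ i) x0) < \<eta>"
      unfolding eventually_sequentially by auto
    have "{i. i \<ge> M} \<subseteq> T_set f n z (1 / real (Suc k))"
    proof
      fix i assume i: "i \<in> {i. i \<ge> M}"
      have "dist ((f ^^ i) (z j)) ((f ^^ i) (z l)) < 1 / real (Suc k)" if jl: "j < l" "l < n" for j l
      proof -
        have "dist ((f ^^ i) (z j)) ((f ^^ i) (z l)) \<le> dist ((f ^^ i) (z j)) ((f ^^ i) x0) + dist ((f ^^ i) (z l)) ((f ^^ i) x0)"
          by (rule dist_triangle2)
        moreover have "dist ((f ^^ i) (z j)) ((f ^^ i) x0) < \<eta>" using M[of i j] i jl by simp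
        moreover have "dist ((f ^^ i) (z l)) ((f ^^ i) x0) < \<eta>" using M[of i l] i jl by simp
        ultimately show ?thesis using \<eta>_def by (rule arith_aux2)
      qed
      then show "i \<in> T_set f n z (1 / real (Suc k))" unfolding T_set_def Max_pd_lt[OF n] by auto
    qed
    then have "T_set f n z (1 / real (Suc k)) \<in> G" by (rule cofinite_in[OF G(1,2)])
    then have "z \<in> AT k" unfolding AT_def using TVe[OF zX] zX by simp
    then show "\<exists>z\<in>PY. z \<in> AT k \<and> z \<in> W" using z by blast
  qed
  define \<U> where "\<U> = (\<lambda>Ob. Ob \<inter> PY) ` (OS \<union> (\<Union>k. OT k))"
  have tsub: "topspace (subtopology X PY) = PY" using PYX by auto
  have "residual_in (subtopology X PY) {z \<in> PY. scrambled F G f n r z}"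
    unfolding residual_in_def
  proof (intro conjI exI[of _ \<U>] ballI)
    show "{z \<in> PY. scrambled F G f n r z} \<subseteq> topspace (subtopology X PY)" using tsub by auto
    show "countable \<U>" unfolding \<U>_def using OS(1) OT(1) by auto
    fix U assume "U \<in> \<U>"
    then obtain Ob where Ob: "U = Ob \<inter> PY" "Ob \<in> OS \<or> (\<exists>k. Ob \<in> OT k)" unfolding \<U>_def by blast
    show "openin (subtopology X PY) U" using Ob OS(2) OT(2) by (auto intro: openin_subtopology_Int)
    show "subtopology X PY closure_of U = topspace (subtopology X PY)"
      using Ob(2)
    proof
      assume "Ob \<in> OS" then show ?thesis unfolding Ob(1) by (rule dense_sub[OF OS(3) _ densS PYX])
    next
      assume "\<exists>k. Ob \<in> OT k"
      then obtain k where "Ob \<in> OT k" by blast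
      then show ?thesis unfolding Ob(1) by (rule dense_sub[OF OT(3) _ densT PYX])
    qed
  next
    show "topspace (subtopology X PY) \<inter> \<Inter>\<U> \<subseteq> {z \<in> PY. scrambled F G f n r z}"
    proof
      fix z assume z: "z \<in> topspace (subtopology X PY) \<inter> \<Inter>\<U>"
      then have zP: "z \<in> PY" using tsub by auto
      have zX: "z \<in> topspace X" using zP PYX by auto
      have zU: "\<And>U. U \<in> \<U> \<Longrightarrow> z \<in> U" using z by blast
      have "z \<in> \<Inter>OS"
      proof
        fix Ob assume "Ob \<in> OS" then have "Ob \<inter> PY \<in> \<U>" unfolding \<U>_def by blast
        then show "z \<in> Ob" using zU by blast
      qed
      then have "z \<in> AS" using OS(3) by simp
      then have S: "S_set f n z r \<in> F" unfolding AS_def using SUr[OF zX] by simp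
      have "z \<in> AT k" for k
      proof -
        have "z \<in> \<Inter>(OT k)"
        proof
          fix Ob assume "Ob \<in> OT k" then have "Ob \<inter> PY \<in> \<U>" unfolding \<U>_def by blast
          then show "z \<in> Ob" using zU by blast
        qed
        then show ?thesis using OT(3) by simp
      qed
      then have Tk: "T_set f n z (1 / real (Suc k)) \<in> G" for k unfolding AT_def using TVe[OF zX] by simp
      have "T_set f n z e \<in> G" if e: "e > 0" for e
      proof -
        obtain k where "inverse (real (Suc k)) < e" using reals_Archimedean e by blast
        then have k: "1 / real (Suc k) < e" by (simp add: inverse_eq_divide)
        have "T_set f n z (1 / real (Suc k)) \<subseteq> T_set f n z e"
          unfolding T_set_def Max_pd_lt[OF n] using k by (auto intro: less_trans)
        then show ?thesis using Tk[of k] G(1) unfolding furstenberg_family_def by blast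
      qed
      then show "z \<in> {z \<in> PY. scrambled F G f n r z}" using zP S unfolding scrambled_def by auto
    qed
  qed
  then show ?thesis unfolding generic_chaotic_def using Yne unfolding PY_def Y_def X_def by simp
qed

end

theorem corollary1p2:
  fixes f :: "'a::metric_space \<Rightarrow> 'a"
    and F G :: "nat set set"
    and C D :: "'a set"
    and n :: nat and \<delta> :: real
    and a :: "nat \<Rightarrow> 'a"
  assumes "compact (UNIV :: 'a set)"
    and "continuous_on UNIV f"
    and "s_limit_shadowing f"
    and "C \<in> chain_components f"
    and "D \<in> D_classes f C"
    and "furstenberg_family F" and "full_family F"
    and "furstenberg_family G" and "full_family G"
    and "\<forall>m\<ge>2. compatible F f m"
    and "\<forall>m\<ge>2. compatible G f m"
    and "translation_invariant F"
    and "n \<ge> 2" and "\<delta> > 0"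
    and "\<forall>j<n. a j \<in> D"
    and "distal_tuple f \<delta> n a"
  shows "\<forall>E \<in> D_classes f C. \<forall>r. 0 < r \<and> r < \<delta> \<longrightarrow> generic_chaotic F G f n r (Vs f C E)"
proof -
  note A = assms
  interpret comp f C by unfold_locales (use A in auto)
  obtain d0 where d0: "d0 \<in> C" "D = Rinf `` {d0}" using class_rep[OF A(5)] by blast
  define da where "da = (INF i. Min (pair_dists f n a i))"
  have da: "da > \<delta>" using A(16) unfolding distal_tuple_def da_def by simp
  have dis: "dist ((f ^^ i) (a j)) ((f ^^ i) (a l)) \<ge> da" if jl: "j < l" "l < n" for i j l
  proof -
    have mem: "dist ((f ^^ i) (a j)) ((f ^^ i) (a l)) \<in> pair_dists f n a i"
      unfolding pair_dists_def using jl by blast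
    have "Min (pair_dists f n a i) \<le> dist ((f ^^ i) (a j)) ((f ^^ i) (a l))"
      by (rule Min_le[OF pd_fin mem])
    moreover have "da \<le> Min (pair_dists f n a i)"
      unfolding da_def
    proof (rule cINF_lower)
      have "0 \<le> Min (pair_dists f n a k)" for k
        using Min_in[OF pd_fin pd_ne[OF A(13)], of f a k] unfolding pair_dists_def by auto
      then show "bdd_below (range (\<lambda>i. Min (pair_dists f n a i)))" by (intro bdd_belowI[of _ 0]) auto
    qed simp
    ultimately show ?thesis by simp
  qed
  have aD: "\<forall>j<n. a j \<in> Rinf `` {d0}" using A(15) d0(2) by simp
  show ?thesis
  proof (intro ballI allI impI, elim conjE)
    fix E r assume E: "E \<in> D_classes f C" and r: "0 < r" "r < \<delta>"
    obtain x0 where x0: "x0 \<in> C" "E = Rinf `` {x0}" using class_rep[OF E] by blast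
    obtain b where b: "\<forall>j<n. b j \<in> Rinf `` {x0}"
      and bd: "\<forall>i j l. j < l \<longrightarrow> l < n \<longrightarrow> dist ((f ^^ i) (b j)) ((f ^^ i) (b l)) \<ge> da"
      using limit_tuple[OF d0(1) x0(1) aD dis] by blast
    have "generic_chaotic F G f n r (Vs f C (Rinf `` {x0}))"
    proof (rule main_comp[OF A(13) x0(1) A(3) A(6,7) _ A(8,9) _ b])
      show "compatible F f n" "compatible G f n" using A(10,11,13) by auto
      show "\<And>i j l. j < l \<Longrightarrow> l < n \<Longrightarrow> da \<le> dist ((f ^^ i) (b j)) ((f ^^ i) (b l))" using bd by blast
      show "r < da" using r da by simp
    qed
    then show "generic_chaotic F G f n r (Vs f C E)" using x0(2) by simp
  qed
qed

end
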